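(* Let $f, g \in \mathrm{Inj}(\Omega)$ each have at least one infinite cycle. Then $f \approx_{\mathrm{fin}} g$ if and only if $f = hh_1gh_2h^{-1}$ for some $h \in \mathrm{Sym}(\Omega)$ and $h_1, h_2 \in \mathrm{Fin}(\Omega)$.
   Context: $\Omega$ is a countably infinite set; maps are written on the right and composed left to right. $\mathrm{Inj}(\Omega)$ is the monoid of injective maps $\Omega\to\Omega$, $\mathrm{Sym}(\Omega)$ the permutation group, $\mathrm{Fin}(\Omega)$ the permutations moving only finitely many points. For $f\in\mathrm{Inj}(\Omega)$, a cycle of $f$ is a nonempty $\Sigma\subseteq\Omega$ such that (a) for all $\alpha\in\Omega$, $(\alpha)f\in\Sigma$ iff $\alpha\in\Sigma$, and (b) no proper nonempty subset of $\Sigma$ satisfies (a). A forward cycle is an infinite cycle $\Sigma$ with $\Sigma\setminus(\Omega)f\ne\emptyset$; an open cycle is an infinite cycle that is not forward. For $n\in\mathbb{Z}_+$, $(f)\mathrm{C}_n$ is the cardinal number of cycles of $f$ of cardinality $n$; $(f)\mathrm{C}_{\mathrm{open}}$, $(f)\mathrm{C}_{\mathrm{fwd}}$ are the numbers of open and forward cycles. $f\approx_{\mathrm{fin}}g$ means: $(f)\mathrm{C}_{\mathrm{open}}=(g)\mathrm{C}_{\mathrm{open}}$; $(f)\mathrm{C}_{\mathrm{fwd}}=(g)\mathrm{C}_{\mathrm{fwd}}$; $(f)\mathrm{C}_n\ne(g)\mathrm{C}_n$ for only finitely many $n\in\mathbb{Z}_+$; and whenever $(f)\mathrm{C}_n\ne(g)\mathrm{C}_n$,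 both are finite. *)

theory Defs
  imports "HOL-Library.Countable_Set" "HOL-Library.Equipollence"
begin

text \<open>Maps are written on the right in the paper; here they are ordinary functions.
  A set S is invariant under f in the sense of condition (a).\<close>
definition closed_under :: "('a \<Rightarrow> 'a) \<Rightarrow> 'a set \<Rightarrow> bool" where
  "closed_under f S \<longleftrightarrow> (\<forall>a. f a \<in> S \<longleftrightarrow> a \<in> S)"

definition is_cycle :: "('a \<Rightarrow> 'a) \<Rightarrow> 'a set \<Rightarrow> bool" where
  "is_cycle f S \<longleftrightarrow> S \<noteq> {} \<and> closed_under f S \<and>
     (\<forall>T. T \<subset> S \<and> T \<noteq> {} \<longrightarrow> \<not> closed_under f T)"

definition forward_cycle :: "('a \<Rightarrow> 'a) \<Rightarrow> 'a set \<Rightarrow> bool" where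
  "forward_cycle f S \<longleftrightarrow> is_cycle f S \<and> infinite S \<and> S - range f \<noteq> {}"

definition open_cycle :: "('a \<Rightarrow> 'a) \<Rightarrow> 'a set \<Rightarrow> bool" where
  "open_cycle f S \<longleftrightarrow> is_cycle f S \<and> infinite S \<and> \<not> forward_cycle f S"

definition cycles_card :: "('a \<Rightarrow> 'a) \<Rightarrow> nat \<Rightarrow> 'a set set" where
  "cycles_card f n = {S. is_cycle f S \<and> finite S \<and> card S = n}"

definition approx_fin :: "('a \<Rightarrow> 'a) \<Rightarrow> ('a \<Rightarrow> 'a) \<Rightarrow> bool" where
  "approx_fin f g \<longleftrightarrow>
     ({S. open_cycle f S} \<approx> {S. open_cycle g S}) \<and>
     ({S. forward_cycle f S} \<approx> {S. forward_cycle g S}) \<and>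
     finite {n::nat. 0 < n \<and> \<not> (cycles_card f n \<approx> cycles_card g n)} \<and>
     (\<forall>n::nat. 0 < n \<and> \<not> (cycles_card f n \<approx> cycles_card g n) \<longrightarrow>
        finite (cycles_card f n) \<and> finite (cycles_card g n))"

definition fin_perm :: "('a \<Rightarrow> 'a) \<Rightarrow> bool" where
  "fin_perm h \<longleftrightarrow> bij h \<and> finite {x. h x \<noteq> x}"

end

theory Submission
  imports Defs
begin


definition conn :: "('a \<Rightarrow> 'a) \<Rightarrow> 'a \<Rightarrow> 'a set" where
  "conn f x = {y. \<exists>m n. (f^^m) x = (f^^n) y}"

lemma funpow_add_apply: "(f^^(m+n)) x = (f^^m) ((f^^n) x)"
  by (simp add: funpow_add)

lemma conn_refl[simp]: "x \<in> conn f x"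
  unfolding conn_def by blast

lemma conn_sym: "y \<in> conn f x \<Longrightarrow> x \<in> conn f y"
proof -
  assume "y \<in> conn f x"
  then obtain m n where "(f^^m) x = (f^^n) y" unfolding conn_def by blast
  hence "(f^^n) y = (f^^m) x" by simp
  thus ?thesis unfolding conn_def by blast
qed

lemma conn_trans: "y \<in> conn f x \<Longrightarrow> z \<in> conn f y \<Longrightarrow> z \<in> conn f x"
proof -
  assume "y \<in> conn f x" "z \<in> conn f y"
  then obtain m n p q where 1: "(f^^m) x = (f^^n) y" and 2: "(f^^p) y = (f^^q) z"
    unfolding conn_def by blast
  have "(f^^(p+m)) x = (f^^p) ((f^^n) y)" using 1 by (simp add: funpow_add_apply)
  also have "\<dots> = (f^^n) ((f^^p) y)" by (simp flip: funpow_add_apply add: add.commute)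
  also have "\<dots> = (f^^(n+q)) z" using 2 by (simp add: funpow_add_apply)
  finally have "(f^^(p+m)) x = (f^^(n+q)) z" .
  thus ?thesis unfolding conn_def by blast
qed

lemma conn_eq: "y \<in> conn f x \<Longrightarrow> conn f y = conn f x"
proof
  assume y: "y \<in> conn f x"
  show "conn f y \<subseteq> conn f x" using conn_trans[OF y] by blast
  show "conn f x \<subseteq> conn f y" using conn_trans[OF conn_sym[OF y]] by blast
qed

lemma conn_f[simp]: "f x \<in> conn f x"
proof -
  have "(f^^1) x = (f^^0) (f x)" by simp
  thus ?thesis unfolding conn_def by blast
qed

lemma conn_funpow[simp]: "(f^^n) x \<in> conn f x"
proof -
  have "(f^^n) x = (f^^0) ((f^^n) x)" by simp
  thus ?thesis unfolding conn_def by blast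
qed

lemma conn_f_eq[simp]: "conn f (f x) = conn f x"
  by (simp add: conn_eq)

lemma closed_funpow: "closed_under f S \<Longrightarrow> (f^^n) y \<in> S \<longleftrightarrow> y \<in> S"
  by (induction n) (auto simp: closed_under_def)

lemma closed_conn: "closed_under f (conn f x)"
  unfolding closed_under_def
proof (intro allI iffI)
  fix a assume "f a \<in> conn f x"
  thus "a \<in> conn f x" using conn_trans[OF _ conn_sym[OF conn_f[of f a]]] by blast
next
  fix a assume "a \<in> conn f x"
  thus "f a \<in> conn f x" using conn_trans[OF _ conn_f[of f a]] by blast
qed

lemma closed_sub: "closed_under f S \<Longrightarrow> x \<in> S \<Longrightarrow> conn f x \<subseteq> S"
proof
  fix y assume c: "closed_under f S" and x: "x \<in> S" and y: "y \<in> conn f x"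
  then obtain m n where "(f^^m) x = (f^^n) y" unfolding conn_def by blast
  moreover have "(f^^m) x \<in> S" using closed_funpow[OF c] x by blast
  ultimately show "y \<in> S" using closed_funpow[OF c] by metis
qed

lemma is_cycle_conn: "is_cycle f (conn f x)"
  unfolding is_cycle_def
proof (intro conjI allI impI)
  show "conn f x \<noteq> {}" using conn_refl[of x f] by blast
  show "closed_under f (conn f x)" by (rule closed_conn)
  fix T assume T: "T \<subset> conn f x \<and> T \<noteq> {}"
  show "\<not> closed_under f T"
  proof
    assume c: "closed_under f T"
    from T obtain y where y: "y \<in> T" by blast
    have "conn f y \<subseteq> T" by (rule closed_sub[OF c y])
    moreover have "y \<in> conn f x" using T y by blast
    hence "conn f y = conn f x" by (rule conn_eq)
    ultimately show False using T by auto
  qed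
qed

lemma is_cycle_eq: "is_cycle f S \<Longrightarrow> x \<in> S \<Longrightarrow> S = conn f x"
proof -
  assume S: "is_cycle f S" and x: "x \<in> S"
  have c: "closed_under f S" using S unfolding is_cycle_def by simp
  have sub: "conn f x \<subseteq> S" by (rule closed_sub[OF c x])
  show ?thesis
  proof (rule ccontr)
    assume "S \<noteq> conn f x"
    hence "conn f x \<subset> S" using sub by blast
    moreover have "conn f x \<noteq> {}" using conn_refl[of x f] by blast
    moreover have "\<forall>T. T \<subset> S \<and> T \<noteq> {} \<longrightarrow> \<not> closed_under f T" using S unfolding is_cycle_def by simp
    ultimately have "\<not> closed_under f (conn f x)" by simp
    thus False using closed_conn[of f x] by simp
  qed
qed

lemma is_cycle_iff: "is_cycle f S \<longleftrightarrow> (\<exists>x. S = conn f x)"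
proof
  assume "is_cycle f S"
  moreover then obtain x where "x \<in> S" unfolding is_cycle_def by auto
  ultimately have "S = conn f x" by (rule is_cycle_eq)
  thus "\<exists>x. S = conn f x" by (rule exI)
next
  assume "\<exists>x. S = conn f x"
  then obtain x where "S = conn f x" by (erule exE)
  thus "is_cycle f S" using is_cycle_conn by simp
qed

lemma cycle_disj: "is_cycle f S \<Longrightarrow> is_cycle f T \<Longrightarrow> S \<inter> T \<noteq> {} \<Longrightarrow> S = T"
proof -
  assume a: "is_cycle f S" "is_cycle f T" "S \<inter> T \<noteq> {}"
  then obtain x where x: "x \<in> S" "x \<in> T" by blast
  have "S = conn f x" by (rule is_cycle_eq[OF a(1) x(1)])
  moreover have "T = conn f x" by (rule is_cycle_eq[OF a(2) x(2)])
  ultimately show ?thesis by simp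
qed

lemma conn_cases:
  assumes "inj f" "y \<in> conn f x"
  shows "(\<exists>j. y = (f^^j) x) \<or> (\<exists>j. x = (f^^j) y)"
proof -
  obtain m n where mn: "(f^^m) x = (f^^n) y" using assms unfolding conn_def by blast
  show ?thesis
  proof (cases "n \<le> m")
    case True
    then obtain d where "m = n + d" using le_Suc_ex by blast
    hence "(f^^n) ((f^^d) x) = (f^^n) y" using mn funpow_add_apply[where f=f and m=n and n=d and x=x] by simp
    hence "(f^^d) x = y" using inj_fn[OF assms(1)] injD by metis
    thus ?thesis by (intro disjI1 exI[of _ d]) simp
  next
    case False
    have "m \<le> n" using False by simp
    then obtain d where "n = m + d" using le_Suc_ex by blast
    hence "(f^^m) x = (f^^m) ((f^^d) y)" using mn funpow_add_apply[where f=f and m=m and n=d and x=y] by simp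
    hence "x = (f^^d) y" using inj_fn[OF assms(1)] injD by metis
    thus ?thesis by (intro disjI2 exI[of _ d]) simp
  qed
qed


lemma funpow_Suc_apply: "(f^^(Suc n)) x = f ((f^^n) x)" by simp

lemma open_cycle_iff: "open_cycle f S \<longleftrightarrow> is_cycle f S \<and> infinite S \<and> S \<subseteq> range f"
  unfolding open_cycle_def forward_cycle_def by auto

lemma forward_cycle_iff: "forward_cycle f S \<longleftrightarrow> is_cycle f S \<and> infinite S \<and> \<not> S \<subseteq> range f"
  unfolding forward_cycle_def by auto

lemma funpow_cancel:
  assumes "inj f" "(f^^i) x = (f^^(i+d)) y" shows "x = (f^^d) y"
proof -
  have "(f^^i) x = (f^^i) ((f^^d) y)" using assms(2) funpow_add_apply[where f=f and m=i and n=d and x=y] by simp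
  thus ?thesis using inj_fn[OF assms(1), of i] injD by metis
qed

lemma periodic_conn:
  assumes "inj f" "(f^^p) z = z" "0 < p"
  shows "conn f z = (\<lambda>i. (f^^i) z) ` {..<p}"
proof
  show "(\<lambda>i. (f^^i) z) ` {..<p} \<subseteq> conn f z" by auto
  have "closed_under f ((\<lambda>i. (f^^i) z) ` {..<p})"
    unfolding closed_under_def
  proof (intro allI iffI)
    fix a assume "a \<in> (\<lambda>i. (f^^i) z) ` {..<p}"
    then obtain i where i: "i < p" "a = (f^^i) z" by blast
    show "f a \<in> (\<lambda>i. (f^^i) z) ` {..<p}"
    proof (cases "Suc i < p")
      case True
      thus ?thesis using i by (intro image_eqI[of _ _ "Suc i"]) auto
    next
      case False
      hence "Suc i = p" using i by simp
      hence "f a = (f^^0) z" using i assms(2) by (metis funpow_Suc_apply funpow_0)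
      thus ?thesis using assms(3) by (intro image_eqI[of _ _ 0]) auto
    qed
  next
    fix a assume "f a \<in> (\<lambda>i. (f^^i) z) ` {..<p}"
    then obtain i where i: "i < p" "f a = (f^^i) z" by blast
    show "a \<in> (\<lambda>i. (f^^i) z) ` {..<p}"
    proof (cases i)
      case 0
      obtain q where q: "p = Suc q" using assms(3) by (cases p) auto
      have "f a = f ((f^^q) z)" using i 0 q assms(2) by simp
      hence "a = (f^^q) z" using assms(1) injD by metis
      thus ?thesis using q by auto
    next
      case (Suc q)
      have "f a = f ((f^^q) z)" using i Suc by simp
      hence "a = (f^^q) z" using assms(1) injD by metis
      thus ?thesis using Suc i by auto
    qed
  qed
  moreover have "z \<in> (\<lambda>i. (f^^i) z) ` {..<p}" using assms(3) by (intro image_eqI[of _ _ 0]) auto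
  ultimately show "conn f z \<subseteq> (\<lambda>i. (f^^i) z) ` {..<p}" by (rule closed_sub)
qed

lemma finite_cycle_period:
  assumes "inj f" "finite (conn f x)" shows "\<exists>p>0. (f^^p) x = x"
proof -
  have "range (\<lambda>i. (f^^i) x) \<subseteq> conn f x" by auto
  hence "finite (range (\<lambda>i. (f^^i) x))" using assms(2) finite_subset by blast
  hence "\<not> inj (\<lambda>i. (f^^i) x)" using range_inj_infinite by blast
  then obtain i j where ij: "(f^^i) x = (f^^j) x" "i \<noteq> j" unfolding inj_def by blast
  show ?thesis
  proof (cases "i < j")
    case True
    then obtain d where d: "j = i + d" "0 < d" using less_imp_add_positive by blast
    hence "x = (f^^d) x" using funpow_cancel[OF assms(1), of i x d x] ij by simp
    thus ?thesis using d by auto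
  next
    case False
    then obtain d where d: "i = j + d" "0 < d" using ij(2) less_imp_add_positive[of j i] by auto
    hence "x = (f^^d) x" using funpow_cancel[OF assms(1), of j x d x] ij by simp
    thus ?thesis using d by auto
  qed
qed

lemma finite_cycle_model:
  assumes "inj f" "finite (conn f x)"
  defines "n \<equiv> card (conn f x)"
  shows "0 < n" "(f^^n) x = x" "bij_betw (\<lambda>i. (f^^i) x) {..<n} (conn f x)"
proof -
  define p where "p = (LEAST p. 0 < p \<and> (f^^p) x = x)"
  have p: "0 < p \<and> (f^^p) x = x" unfolding p_def
    using finite_cycle_period[OF assms(1,2)] by (metis (mono_tags, lifting) LeastI)
  have pmin: "\<And>q. 0 < q \<Longrightarrow> q < p \<Longrightarrow> (f^^q) x \<noteq> x"
    unfolding p_def using not_less_Least by blast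
  have inj: "inj_on (\<lambda>i. (f^^i) x) {..<p}"
  proof (rule inj_onI)
    fix i j assume ij: "i \<in> {..<p}" "j \<in> {..<p}" "(f^^i) x = (f^^j) x"
    show "i = j"
    proof (rule ccontr)
      assume "i \<noteq> j"
      then consider "i < j" | "j < i" by linarith
      thus False
      proof cases
        case 1
        then obtain d where d: "j = i + d" "0 < d" using less_imp_add_positive by blast
        hence "x = (f^^d) x" using funpow_cancel[OF assms(1), of i x d x] ij by simp
        thus False using pmin[of d] d ij by simp
      next
        case 2
        then obtain d where d: "i = j + d" "0 < d" using less_imp_add_positive by blast
        hence "x = (f^^d) x" using funpow_cancel[OF assms(1), of j x d x] ij by simp
        thus False using pmin[of d] d ij by simp
      qed
    qed
  qed
  have eq: "conn f x = (\<lambda>i. (f^^i) x) ` {..<p}" using periodic_conn[OF assms(1)] p by blast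
  have "n = p" unfolding n_def eq using card_image[OF inj] by simp
  thus "0 < n" "(f^^n) x = x" "bij_betw (\<lambda>i. (f^^i) x) {..<n} (conn f x)"
    using p inj eq unfolding bij_betw_def by auto
qed

lemma finite_cycle_in_range:
  assumes "inj f" "finite (conn f x)" shows "conn f x \<subseteq> range f"
proof
  fix y assume "y \<in> conn f x"
  then obtain i where i: "i < card (conn f x)" "y = (f^^i) x"
    using finite_cycle_model(3)[OF assms] unfolding bij_betw_def by auto
  show "y \<in> range f"
  proof (cases i)
    case 0
    obtain q where q: "card (conn f x) = Suc q" using finite_cycle_model(1)[OF assms] by (cases "card (conn f x)") auto
    have "y = (f^^(card (conn f x))) x" using i 0 finite_cycle_model(2)[OF assms] by simp
    thus ?thesis using q by simp
  next
    case (Suc q) thus ?thesis using i by simp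
  qed
qed

lemma fwd_model:
  assumes "inj f" "b \<notin> range f"
  shows "bij_betw (\<lambda>i. (f^^i) b) UNIV (conn f b)"
proof -
  have inj: "inj (\<lambda>i. (f^^i) b)"
  proof (rule injI)
    fix i j assume ij: "(f^^i) b = (f^^j) b"
    have nope: "\<And>d. 0 < d \<Longrightarrow> b \<noteq> (f^^d) b"
    proof -
      fix d :: nat assume "0 < d"
      then obtain q where "d = Suc q" by (cases d) auto
      thus "b \<noteq> (f^^d) b" using assms(2) by auto
    qed
    show "i = j"
    proof (rule ccontr)
      assume "i \<noteq> j"
      then consider "i < j" | "j < i" by linarith
      thus False
      proof cases
        case 1
        then obtain d where d: "j = i + d" "0 < d" using less_imp_add_positive by blast
        thus False using funpow_cancel[OF assms(1), of i b d b] ij nope by simp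
      next
        case 2
        then obtain d where d: "i = j + d" "0 < d" using less_imp_add_positive by blast
        thus False using funpow_cancel[OF assms(1), of j b d b] ij nope by simp
      qed
    qed
  qed
  have "closed_under f (range (\<lambda>i. (f^^i) b))"
    unfolding closed_under_def
  proof (intro allI iffI)
    fix a assume "a \<in> range (\<lambda>i. (f^^i) b)"
    then obtain i where "a = (f^^i) b" by blast
    hence "f a = (f^^(Suc i)) b" by simp
    thus "f a \<in> range (\<lambda>i. (f^^i) b)" by blast
  next
    fix a assume "f a \<in> range (\<lambda>i. (f^^i) b)"
    then obtain i where i: "f a = (f^^i) b" by blast
    show "a \<in> range (\<lambda>i. (f^^i) b)"
    proof (cases i)
      case 0 thus ?thesis using i assms(2) by (metis funpow_0 rangeI)
    next
      case (Suc q)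
      hence "f a = f ((f^^q) b)" using i by simp
      hence "a = (f^^q) b" using assms(1) injD by metis
      thus ?thesis by blast
    qed
  qed
  hence "conn f b \<subseteq> range (\<lambda>i. (f^^i) b)" by (rule closed_sub) (metis funpow_0 rangeI)
  moreover have "range (\<lambda>i. (f^^i) b) \<subseteq> conn f b" by auto
  ultimately show ?thesis using inj unfolding bij_betw_def by auto
qed

lemma fwd_unique:
  assumes "inj f" "b \<notin> range f" "b' \<in> conn f b" "b' \<notin> range f"
  shows "b' = b"
proof -
  obtain i where i: "b' = (f^^i) b" using fwd_model[OF assms(1,2)] assms(3) unfolding bij_betw_def by auto
  show ?thesis
  proof (cases i)
    case 0 thus ?thesis using i by simp
  next
    case (Suc q) thus ?thesis using i assms(4) by simp
  qed
qed


lemma open_model: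
  assumes f: "inj f" and inf: "infinite (conn f x)" and rg: "conn f x \<subseteq> range f"
  shows "\<exists>P::int \<Rightarrow> 'a. bij_betw P UNIV (conn f x) \<and> (\<forall>i. f (P i) = P (i+1)) \<and> P 0 = x"
proof -
  define g where "g = inv f"
  have fg: "\<And>y. y \<in> conn f x \<Longrightarrow> f (g y) = y" unfolding g_def using rg by (meson f_inv_into_f subsetD)
  have gin: "\<And>m. (g^^m) x \<in> conn f x"
  proof -
    fix m show "(g^^m) x \<in> conn f x"
    proof (induction m)
      case 0 thus ?case by simp
    next
      case (Suc m)
      have "f (g ((g^^m) x)) \<in> conn f x" using fg[OF Suc] Suc by simp
      hence "g ((g^^m) x) \<in> conn f x" using closed_conn[of f x] unfolding closed_under_def by blast
      thus ?case by simp
    qed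
  qed
  define P where "P i = (if 0 \<le> i then (f^^nat i) x else (g^^nat (-i)) x)" for i :: int
  have P0: "P 0 = x" unfolding P_def by simp
  have Pin: "\<And>i. P i \<in> conn f x" unfolding P_def using gin by auto
  have Pstep: "\<And>i. f (P i) = P (i+1)"
  proof -
    fix i :: int
    consider "0 \<le> i" | "i = -1" | "i < -1" by linarith
    thus "f (P i) = P (i+1)"
    proof cases
      case 1
      hence "nat (i+1) = Suc (nat i)" by simp
      thus ?thesis using 1 unfolding P_def by simp
    next
      case 2
      have "P i = g x" unfolding P_def using 2 by simp
      thus ?thesis using fg[of x] 2 P0 by simp
    next
      case 3
      have e: "nat (-i) = Suc (nat (-(i+1)))" using 3 by simp
      have "P i = g (P (i+1))" unfolding P_def using 3 e by simp
      thus ?thesis using fg[OF Pin[of "i+1"]] by simp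
    qed
  qed
  have Piter: "\<And>i j. P (i + int j) = (f^^j) (P i)"
  proof -
    fix i :: int and j :: nat
    show "P (i + int j) = (f^^j) (P i)"
    proof (induction j)
      case 0 thus ?case by simp
    next
      case (Suc j)
      have "P (i + int (Suc j)) = P ((i + int j) + 1)" by (simp add: algebra_simps)
      also have "\<dots> = f (P (i + int j))" using Pstep by simp
      finally show ?case using Suc by simp
    qed
  qed
  have inj: "inj P"
  proof (rule injI)
    fix i j assume ij: "P i = P j"
    show "i = j"
    proof (rule ccontr)
      assume ne: "i \<noteq> j"
      have key: "\<And>a b. a < b \<Longrightarrow> P a = P b \<Longrightarrow> False"
      proof -
        fix a b :: int assume ab: "a < b" "P a = P b"
        define d where "d = nat (b - a)"
        have "b = a + int d" "0 < d" unfolding d_def using ab by auto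
        hence "(f^^d) (P a) = P a" using Piter[of a d] ab by simp
        hence "conn f (P a) = (\<lambda>k. (f^^k) (P a)) ` {..<d}" using periodic_conn[OF f _ \<open>0<d\<close>] by simp
        hence "finite (conn f (P a))" by simp
        moreover have "conn f (P a) = conn f x" by (rule conn_eq[OF Pin])
        ultimately show False using inf by simp
      qed
      show False
      proof (cases "i < j")
        case True thus False using key[of i j] ij by simp
      next
        case False hence "j < i" using ne by simp
        thus False using key[of j i] ij by simp
      qed
    qed
  qed
  have "closed_under f (range P)"
    unfolding closed_under_def
  proof (intro allI iffI)
    fix a assume "a \<in> range P"
    then obtain i where "a = P i" by blast
    thus "f a \<in> range P" using Pstep by auto
  next
    fix a assume "f a \<in> range P"
    then obtain i where i: "f a = P i" by blast
    hence "f a = f (P (i - 1))" using Pstep[of "i-1"] by simp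
    hence "a = P (i - 1)" using f injD by metis
    thus "a \<in> range P" by blast
  qed
  hence "conn f x \<subseteq> range P" by (rule closed_sub) (metis P0 rangeI)
  hence "bij_betw P UNIV (conn f x)" using inj Pin unfolding bij_betw_def by auto
  thus ?thesis using Pstep P0 by blast
qed

lemma model_iso:
  assumes "bij_betw P M S" "\<And>i. i \<in> M \<Longrightarrow> s i \<in> M" "\<And>i. i \<in> M \<Longrightarrow> f (P i) = P (s i)"
    and "bij_betw Q M T" "\<And>i. i \<in> M \<Longrightarrow> k (Q i) = Q (s i)"
  shows "\<exists>\<psi>. bij_betw \<psi> S T \<and> (\<forall>x\<in>S. \<psi> (f x) = k (\<psi> x))"
proof -
  define \<psi> where "\<psi> = Q \<circ> inv_into M P"
  have "bij_betw (inv_into M P) S M" using assms(1) by (rule bij_betw_inv_into)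
  hence b: "bij_betw \<psi> S T" unfolding \<psi>_def using assms(4) bij_betw_trans by blast
  have "\<forall>x\<in>S. \<psi> (f x) = k (\<psi> x)"
  proof
    fix x assume x: "x \<in> S"
    define i where "i = inv_into M P x"
    have i: "i \<in> M" "P i = x" unfolding i_def using x assms(1)
      by (auto simp: bij_betw_def inv_into_into f_inv_into_f)
    have "inv_into M P (f x) = s i"
      using i assms(2,3) assms(1) unfolding bij_betw_def by (metis inv_into_f_f)
    thus "\<psi> (f x) = k (\<psi> x)" unfolding \<psi>_def using i assms(5) i_def by simp
  qed
  thus ?thesis using b by blast
qed


definition ftag :: "('a \<Rightarrow> 'a) \<Rightarrow> 'a set \<Rightarrow> nat + bool" where
  "ftag f S = (if finite S then Inl (card S) else Inr (S \<subseteq> range f))"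

lemma iso_cycles:
  fixes f k :: "'a \<Rightarrow> 'a"
  assumes f: "inj f" and k: "inj k" and S: "is_cycle f S" and T: "is_cycle k T"
    and tag: "ftag f S = ftag k T"
  shows "\<exists>\<psi>. bij_betw \<psi> S T \<and> (\<forall>x\<in>S. \<psi> (f x) = k (\<psi> x))"
proof -
  obtain x where x: "S = conn f x" using is_cycle_iff[THEN iffD1, OF S] by (elim exE)
  obtain y where y: "T = conn k y" using is_cycle_iff[THEN iffD1, OF T] by (elim exE)
  show ?thesis
  proof (cases "finite S")
    case True
    have Tf: "finite T" "card S = card T"
    proof -
      have "ftag k T = Inl (card S)" using tag True unfolding ftag_def by simp
      thus "finite T" "card S = card T" unfolding ftag_def by (simp_all split: if_splits)
    qed
    define n where "n = card S"
    have fx: "0 < n" "(f^^n) x = x" "bij_betw (\<lambda>i. (f^^i) x) {..<n} S"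
      using finite_cycle_model[OF f, of x] True unfolding x n_def by simp_all
    have ky: "(k^^n) y = y" "bij_betw (\<lambda>i. (k^^i) y) {..<n} T"
      using finite_cycle_model[OF k, of y] Tf unfolding y n_def by simp_all
    have step: "\<And>(h::'a \<Rightarrow> 'a) z i. (h^^n) z = z \<Longrightarrow> i \<in> {..<n} \<Longrightarrow> h ((h^^i) z) = (h^^(Suc i mod n)) z"
    proof -
      fix h :: "'a \<Rightarrow> 'a" and z i assume hz: "(h^^n) z = z" and i: "i \<in> {..<n}"
      show "h ((h^^i) z) = (h^^(Suc i mod n)) z"
      proof (cases "Suc i < n")
        case True thus ?thesis by simp
      next
        case False hence "Suc i = n" using i by simp
        have "h ((h^^i) z) = (h^^(Suc i)) z" by simp
        also have "\<dots> = z" using \<open>Suc i = n\<close> hz by simp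
        finally have "h ((h^^i) z) = z" .
        thus ?thesis using \<open>Suc i = n\<close> by simp
      qed
    qed
    have sm: "\<And>i. i \<in> {..<n} \<Longrightarrow> Suc i mod n \<in> {..<n}" using fx(1) by simp
    show ?thesis
    proof (rule model_iso[where s="\<lambda>i. Suc i mod n", OF fx(3) _ _ ky(2)])
      fix i assume "i \<in> {..<n}"
      thus "Suc i mod n \<in> {..<n}" by (rule sm)
      show "f ((f^^i) x) = (f^^(Suc i mod n)) x" by (rule step[OF fx(2) \<open>i \<in> {..<n}\<close>])
      show "k ((k^^i) y) = (k^^(Suc i mod n)) y" by (rule step[OF ky(1) \<open>i \<in> {..<n}\<close>])
    qed
  next
    case False
    have Ti: "infinite T" "(S \<subseteq> range f) = (T \<subseteq> range k)"
    proof -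
      have "ftag k T = Inr (S \<subseteq> range f)" using tag False unfolding ftag_def by simp
      thus "infinite T" "(S \<subseteq> range f) = (T \<subseteq> range k)" unfolding ftag_def by (simp_all split: if_splits)
    qed
    show ?thesis
    proof (cases "S \<subseteq> range f")
      case True
      have Si: "infinite (conn f x)" "conn f x \<subseteq> range f" using False True unfolding x by simp_all
      have Ti': "infinite (conn k y)" "conn k y \<subseteq> range k" using Ti True unfolding y by simp_all
      obtain P :: "int \<Rightarrow> 'a" where P: "bij_betw P UNIV (conn f x)" "\<forall>i. f (P i) = P (i+1)" using open_model[OF f Si] by blast
      obtain Q :: "int \<Rightarrow> 'a" where Q: "bij_betw Q UNIV (conn k y)" "\<forall>i. k (Q i) = Q (i+1)" using open_model[OF k Ti'] by blast
      have "\<exists>\<psi>. bij_betw \<psi> (conn f x) (conn k y) \<and> (\<forall>z\<in>conn f x. \<psi> (f z) = k (\<psi> z))"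
        by (rule model_iso[OF P(1) _ _ Q(1), where s="\<lambda>i. i+1"]) (simp_all add: P(2) Q(2))
      thus ?thesis unfolding x y .
    next
      case nr: False
      obtain b where b: "b \<in> S" "b \<notin> range f" using nr by blast
      obtain c where c: "c \<in> T" "c \<notin> range k" using nr Ti by blast
      have Sb: "S = conn f b" by (rule is_cycle_eq[OF S b(1)])
      have Tc: "T = conn k c" by (rule is_cycle_eq[OF T c(1)])
      have P: "bij_betw (\<lambda>i. (f^^i) b) UNIV S" using fwd_model[OF f b(2)] Sb by simp
      have Q: "bij_betw (\<lambda>i. (k^^i) c) UNIV T" using fwd_model[OF k c(2)] Tc by simp
      show ?thesis by (rule model_iso[OF P _ _ Q, where s=Suc]) simp_all
    qed
  qed
qed

lemma conj_from_beta:
  fixes f k :: "'a \<Rightarrow> 'a"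
  assumes f: "inj f" and k: "inj k"
    and \<beta>: "bij_betw \<beta> {S. is_cycle f S} {T. is_cycle k T}"
    and tag: "\<And>S. is_cycle f S \<Longrightarrow> ftag k (\<beta> S) = ftag f S"
  shows "\<exists>h. bij h \<and> (\<forall>x. h (f x) = k (h x))"
proof -
  have \<beta>c: "\<And>S. is_cycle f S \<Longrightarrow> is_cycle k (\<beta> S)" using \<beta> unfolding bij_betw_def by auto
  define \<psi> where "\<psi> S = (SOME \<psi>. bij_betw \<psi> S (\<beta> S) \<and> (\<forall>x\<in>S. \<psi> (f x) = k (\<psi> x)))" for S
  have \<psi>: "\<And>S. is_cycle f S \<Longrightarrow> bij_betw (\<psi> S) S (\<beta> S) \<and> (\<forall>x\<in>S. \<psi> S (f x) = k (\<psi> S x))"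
  proof -
    fix S assume S: "is_cycle f S"
    have "\<exists>\<psi>. bij_betw \<psi> S (\<beta> S) \<and> (\<forall>x\<in>S. \<psi> (f x) = k (\<psi> x))"
      by (rule iso_cycles[OF f k S \<beta>c[OF S]]) (use tag[OF S] in simp)
    thus "bij_betw (\<psi> S) S (\<beta> S) \<and> (\<forall>x\<in>S. \<psi> S (f x) = k (\<psi> S x))"
      unfolding \<psi>_def by (rule someI_ex)
  qed
  define h where "h x = \<psi> (conn f x) x" for x
  have hin: "\<And>x. h x \<in> \<beta> (conn f x)"
  proof -
    fix x
    have "bij_betw (\<psi> (conn f x)) (conn f x) (\<beta> (conn f x))" using \<psi>[OF is_cycle_conn] by blast
    thus "h x \<in> \<beta> (conn f x)" unfolding h_def using conn_refl[of x f] bij_betwE by blast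
  qed
  have comm: "\<forall>x. h (f x) = k (h x)"
    unfolding h_def using \<psi>[OF is_cycle_conn] conn_refl by simp
  have inj: "inj h"
  proof (rule injI)
    fix x y assume hxy: "h x = h y"
    have "\<beta> (conn f x) \<inter> \<beta> (conn f y) \<noteq> {}" using hin[of x] hin[of y] hxy by auto
    hence "\<beta> (conn f x) = \<beta> (conn f y)" by (rule cycle_disj[OF \<beta>c[OF is_cycle_conn] \<beta>c[OF is_cycle_conn]])
    moreover have "inj_on \<beta> {S. is_cycle f S}" using \<beta> unfolding bij_betw_def by simp
    ultimately have e: "conn f x = conn f y" using is_cycle_conn unfolding inj_on_def by (metis mem_Collect_eq)
    have "y \<in> conn f x" using e by simp
    moreover have "inj_on (\<psi> (conn f x)) (conn f x)" using \<psi>[OF is_cycle_conn] unfolding bij_betw_def by blast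
    ultimately show "x = y" using hxy unfolding h_def e[symmetric] inj_on_def by auto
  qed
  have surj: "surj h"
  proof -
    { fix y
      have "conn k y \<in> {T. is_cycle k T}" using is_cycle_conn by simp
      hence "conn k y \<in> \<beta> ` {S. is_cycle f S}" using \<beta> unfolding bij_betw_def by simp
      then obtain S where S: "is_cycle f S" "\<beta> S = conn k y" by blast
      have "y \<in> \<psi> S ` S" using \<psi>[OF S(1)] S(2) unfolding bij_betw_def by auto
      then obtain z where z: "z \<in> S" "y = \<psi> S z" by blast
      have "S = conn f z" by (rule is_cycle_eq[OF S(1) z(1)])
      hence "y = h z" unfolding h_def using z by simp
      hence "y \<in> range h" by simp }
    thus ?thesis by blast
  qed
  show ?thesis using inj surj comm unfolding bij_def by blast
qed

lemma bij_glue: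
  assumes "\<And>t. bij_betw (b t) {x\<in>X. c x = t} {y\<in>Y. d y = t}"
  shows "bij_betw (\<lambda>x. b (c x) x) X Y \<and> (\<forall>x\<in>X. d (b (c x) x) = c x)"
proof -
  have into: "\<And>x. x \<in> X \<Longrightarrow> b (c x) x \<in> Y \<and> d (b (c x) x) = c x"
  proof -
    fix x assume "x \<in> X"
    hence "x \<in> {x\<in>X. c x = c x}" by simp
    hence "b (c x) x \<in> {y\<in>Y. d y = c x}" using assms[of "c x"] unfolding bij_betw_def by blast
    thus "b (c x) x \<in> Y \<and> d (b (c x) x) = c x" by simp
  qed
  have inj: "inj_on (\<lambda>x. b (c x) x) X"
  proof (rule inj_onI)
    fix x y assume xy: "x \<in> X" "y \<in> X" "b (c x) x = b (c y) y"
    have "d (b (c x) x) = c x" "d (b (c y) y) = c y" using into[OF xy(1)] into[OF xy(2)] by simp_all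
    hence cxy: "c x = c y" using xy(3) by simp
    have "inj_on (b (c x)) {z\<in>X. c z = c x}" using assms[of "c x"] unfolding bij_betw_def by blast
    thus "x = y" using xy cxy unfolding inj_on_def by auto
  qed
  have surj: "Y \<subseteq> (\<lambda>x. b (c x) x) ` X"
  proof
    fix y assume y: "y \<in> Y"
    hence "y \<in> {y\<in>Y. d y = d y}" by simp
    hence "y \<in> b (d y) ` {x\<in>X. c x = d y}" using assms[of "d y"] unfolding bij_betw_def by blast
    then obtain x where x: "x \<in> X" "c x = d y" "y = b (d y) x" by blast
    thus "y \<in> (\<lambda>x. b (c x) x) ` X" by (intro image_eqI[of _ _ x]) simp_all
  qed
  show ?thesis using inj surj into unfolding bij_betw_def by blast
qed

lemma class_eqs:
  assumes f: "inj f"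
  shows "{S\<in>{S. is_cycle f S}. ftag f S = Inl n} = (if n = 0 then {} else cycles_card f n)"
    and "{S\<in>{S. is_cycle f S}. ftag f S = Inr True} = {S. open_cycle f S}"
    and "{S\<in>{S. is_cycle f S}. ftag f S = Inr False} = {S. forward_cycle f S}"
proof -
  have ne: "\<And>S. is_cycle f S \<Longrightarrow> finite S \<Longrightarrow> card S \<noteq> 0"
    unfolding is_cycle_def by auto
  show "{S\<in>{S. is_cycle f S}. ftag f S = Inl n} = (if n = 0 then {} else cycles_card f n)"
    unfolding ftag_def cycles_card_def using ne by auto
  show "{S\<in>{S. is_cycle f S}. ftag f S = Inr True} = {S. open_cycle f S}"
    unfolding ftag_def open_cycle_iff by auto
  show "{S\<in>{S. is_cycle f S}. ftag f S = Inr False} = {S. forward_cycle f S}"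
    unfolding ftag_def forward_cycle_iff by auto
qed

definition same_type :: "('a \<Rightarrow> 'a) \<Rightarrow> ('a \<Rightarrow> 'a) \<Rightarrow> bool" where
  "same_type f k \<longleftrightarrow> (\<forall>n>0. cycles_card f n \<approx> cycles_card k n) \<and>
     {S. open_cycle f S} \<approx> {S. open_cycle k S} \<and> {S. forward_cycle f S} \<approx> {S. forward_cycle k S}"

theorem conjugacy:
  fixes f k :: "'a \<Rightarrow> 'a"
  assumes f: "inj f" and k: "inj k" and st: "same_type f k"
  shows "\<exists>h. bij h \<and> (\<forall>x. h (f x) = k (h x))"
proof -
  have "\<forall>t. \<exists>b. bij_betw b {S\<in>{S. is_cycle f S}. ftag f S = t} {T\<in>{T. is_cycle k T}. ftag k T = t}"
  proof
    fix t
    have "{S\<in>{S. is_cycle f S}. ftag f S = t} \<approx> {T\<in>{T. is_cycle k T}. ftag k T = t}"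
    proof (cases t)
      case (Inl n)
      show ?thesis
      proof (cases "n = 0")
        case True
        have "{S\<in>{S. is_cycle f S}. ftag f S = t} = {}" "{T\<in>{T. is_cycle k T}. ftag k T = t} = {}"
          using Inl True class_eqs(1)[OF f, of n] class_eqs(1)[OF k, of n] by simp_all
        thus ?thesis by (simp only: eqpoll_refl)
      next
        case False
        hence "cycles_card f n \<approx> cycles_card k n" using st unfolding same_type_def by simp
        moreover have "{S\<in>{S. is_cycle f S}. ftag f S = t} = cycles_card f n" "{T\<in>{T. is_cycle k T}. ftag k T = t} = cycles_card k n"
          using Inl False class_eqs(1)[OF f, of n] class_eqs(1)[OF k, of n] by simp_all
        ultimately show ?thesis by simp
      qed
    next
      case (Inr bb)
      show ?thesis
      proof (cases bb)
        case True
        have "{S. open_cycle f S} \<approx> {S. open_cycle k S}" using st unfolding same_type_def by simp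
        moreover have "{S\<in>{S. is_cycle f S}. ftag f S = t} = {S. open_cycle f S}" "{T\<in>{T. is_cycle k T}. ftag k T = t} = {S. open_cycle k S}"
          using Inr True class_eqs(2)[OF f] class_eqs(2)[OF k] by simp_all
        ultimately show ?thesis by simp
      next
        case False
        have "{S. forward_cycle f S} \<approx> {S. forward_cycle k S}" using st unfolding same_type_def by simp
        moreover have "{S\<in>{S. is_cycle f S}. ftag f S = t} = {S. forward_cycle f S}" "{T\<in>{T. is_cycle k T}. ftag k T = t} = {S. forward_cycle k S}"
          using Inr False class_eqs(3)[OF f] class_eqs(3)[OF k] by simp_all
        ultimately show ?thesis by simp
      qed
    qed
    thus "\<exists>b. bij_betw b {S\<in>{S. is_cycle f S}. ftag f S = t} {T\<in>{T. is_cycle k T}. ftag k T = t}"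
      unfolding eqpoll_def .
  qed
  from choice[OF this] obtain b where b: "\<And>t. bij_betw (b t) {S\<in>{S. is_cycle f S}. ftag f S = t} {T\<in>{T. is_cycle k T}. ftag k T = t}"
    by blast
  have g: "bij_betw (\<lambda>S. b (ftag f S) S) {S. is_cycle f S} {T. is_cycle k T} \<and>
     (\<forall>S\<in>{S. is_cycle f S}. ftag k (b (ftag f S) S) = ftag f S)"
    by (rule bij_glue[OF b])
  show ?thesis
  proof (rule conj_from_beta[OF f k conjunct1[OF g]])
    fix S assume "is_cycle f S"
    thus "ftag k (b (ftag f S) S) = ftag f S" using conjunct2[OF g] by simp
  qed
qed


lemma conn_conj:
  assumes h: "bij h" and comm: "\<And>x. h (f x) = k (h x)"
  shows "h ` conn f x = conn k (h x)"
proof -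
  have it: "\<And>n y. h ((f^^n) y) = (k^^n) (h y)"
  proof -
    fix n y show "h ((f^^n) y) = (k^^n) (h y)" by (induction n) (simp_all add: comm)
  qed
  have inj: "inj h" using h bij_is_inj by blast
  have mem: "\<And>y. h y \<in> conn k (h x) \<longleftrightarrow> y \<in> conn f x"
  proof -
    fix y
    have "(\<exists>m n. (k^^m) (h x) = (k^^n) (h y)) \<longleftrightarrow> (\<exists>m n. (f^^m) x = (f^^n) y)"
      using it inj injD by metis
    thus "h y \<in> conn k (h x) \<longleftrightarrow> y \<in> conn f x" unfolding conn_def by simp
  qed
  show ?thesis
  proof
    show "h ` conn f x \<subseteq> conn k (h x)" using mem by blast
    show "conn k (h x) \<subseteq> h ` conn f x"
    proof
      fix z assume z: "z \<in> conn k (h x)"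
      have "z = h (inv h z)" using h by (simp add: bij_is_surj surj_f_inv_f)
      then obtain y where y: "z = h y" by (rule that)
      thus "z \<in> h ` conn f x" using mem z by blast
    qed
  qed
qed

lemma conj_same_type:
  fixes f k :: "'a \<Rightarrow> 'a"
  assumes f: "inj f" and k: "inj k" and h: "bij h" and comm: "\<And>x. h (f x) = k (h x)"
  shows "same_type f k"
proof -
  have inj: "inj h" using h bij_is_inj by blast
  have rng: "range k = h ` range f"
  proof -
    have "range k = k ` range h" using h unfolding bij_def by simp
    also have "\<dots> = h ` range f" unfolding image_image comm[symmetric] ..
    finally show ?thesis .
  qed
  have cyc: "\<And>S. is_cycle f S \<Longrightarrow> is_cycle k (h ` S)"
  proof -
    fix S assume "is_cycle f S"
    then obtain x where "S = conn f x" using is_cycle_iff[THEN iffD1] by blast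
    hence "h ` S = conn k (h x)" using conn_conj[where f=f and k=k, OF h comm] by simp
    thus "is_cycle k (h ` S)" using is_cycle_conn by simp
  qed
  have cyc2: "\<And>T. is_cycle k T \<Longrightarrow> \<exists>S. is_cycle f S \<and> T = h ` S"
  proof -
    fix T assume "is_cycle k T"
    then obtain y where y: "T = conn k y" using is_cycle_iff[THEN iffD1] by blast
    have "y = h (inv h y)" using h by (simp add: bij_is_surj surj_f_inv_f)
    then obtain x where "y = h x" by (rule that)
    hence "T = h ` conn f x" using y conn_conj[where f=f and k=k, OF h comm] by simp
    thus "\<exists>S. is_cycle f S \<and> T = h ` S" by (intro exI[of _ "conn f x"] conjI is_cycle_conn)
  qed
  have tag: "\<And>S. ftag k (h ` S) = ftag f S"
  proof -
    fix S
    have ij: "inj_on h S" using inj inj_on_subset by blast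
    have "finite (h ` S) = finite S" by (rule finite_image_iff[OF ij])
    moreover have "card (h ` S) = card S" by (rule card_image[OF ij])
    moreover have "(h ` S \<subseteq> range k) = (S \<subseteq> range f)" unfolding rng using inj by (simp add: inj_image_subset_iff)
    ultimately show "ftag k (h ` S) = ftag f S" unfolding ftag_def by simp
  qed
  have bij: "\<And>t. bij_betw ((`) h) {S\<in>{S. is_cycle f S}. ftag f S = t} {T\<in>{T. is_cycle k T}. ftag k T = t}"
  proof -
    fix t
    show "bij_betw ((`) h) {S\<in>{S. is_cycle f S}. ftag f S = t} {T\<in>{T. is_cycle k T}. ftag k T = t}"
      unfolding bij_betw_def
    proof
      show "inj_on ((`) h) {S \<in> {S. is_cycle f S}. ftag f S = t}"
        using inj by (simp add: inj_on_def inj_image_eq_iff)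
      show "(`) h ` {S \<in> {S. is_cycle f S}. ftag f S = t} = {T \<in> {T. is_cycle k T}. ftag k T = t}"
      proof
        show "(`) h ` {S \<in> {S. is_cycle f S}. ftag f S = t} \<subseteq> {T \<in> {T. is_cycle k T}. ftag k T = t}"
        proof
          fix T assume "T \<in> (`) h ` {S \<in> {S. is_cycle f S}. ftag f S = t}"
          then obtain S where "S \<in> {S \<in> {S. is_cycle f S}. ftag f S = t}" "T = h ` S" by blast
          thus "T \<in> {T \<in> {T. is_cycle k T}. ftag k T = t}" using cyc tag by simp
        qed
        show "{T \<in> {T. is_cycle k T}. ftag k T = t} \<subseteq> (`) h ` {S \<in> {S. is_cycle f S}. ftag f S = t}"
        proof
          fix T assume T: "T \<in> {T \<in> {T. is_cycle k T}. ftag k T = t}"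
          hence "is_cycle k T" by simp
          then obtain S where S: "is_cycle f S" "T = h ` S" using cyc2[of T] by blast
          hence "ftag f S = t" using T tag by simp
          thus "T \<in> (`) h ` {S \<in> {S. is_cycle f S}. ftag f S = t}" using S by blast
        qed
      qed
    qed
  qed
  have e: "\<And>t. {S\<in>{S. is_cycle f S}. ftag f S = t} \<approx> {T\<in>{T. is_cycle k T}. ftag k T = t}"
    unfolding eqpoll_def using bij by blast
  show ?thesis unfolding same_type_def
  proof (intro conjI allI impI)
    fix n :: nat assume "0 < n"
    thus "cycles_card f n \<approx> cycles_card k n" using e[of "Inl n"] class_eqs(1)[OF f, of n] class_eqs(1)[OF k, of n] by simp
  next
    show "{S. open_cycle f S} \<approx> {S. open_cycle k S}" using e[of "Inr True"] class_eqs(2)[OF f] class_eqs(2)[OF k] by simp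
  next
    show "{S. forward_cycle f S} \<approx> {S. forward_cycle k S}" using e[of "Inr False"] class_eqs(3)[OF f] class_eqs(3)[OF k] by simp
  qed
qed

lemma same_type_approx:
  assumes "same_type f k" "approx_fin k g" shows "approx_fin f g"
proof -
  have n: "\<And>n. 0 < n \<Longrightarrow> cycles_card f n \<approx> cycles_card k n" using assms(1) unfolding same_type_def by blast
  have "{n::nat. 0 < n \<and> \<not> (cycles_card f n \<approx> cycles_card g n)} \<subseteq> {n::nat. 0 < n \<and> \<not> (cycles_card k n \<approx> cycles_card g n)}"
    using n eqpoll_trans by blast
  moreover have "finite {n::nat. 0 < n \<and> \<not> (cycles_card k n \<approx> cycles_card g n)}" using assms(2) unfolding approx_fin_def by blast
  ultimately have fin: "finite {n::nat. 0 < n \<and> \<not> (cycles_card f n \<approx> cycles_card g n)}" by (rule finite_subset)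
  have "\<forall>n::nat. 0 < n \<and> \<not> (cycles_card f n \<approx> cycles_card g n) \<longrightarrow> finite (cycles_card f n) \<and> finite (cycles_card g n)"
  proof (intro allI impI)
    fix n :: nat assume a: "0 < n \<and> \<not> (cycles_card f n \<approx> cycles_card g n)"
    hence fk: "cycles_card f n \<approx> cycles_card k n" using n by blast
    hence "\<not> (cycles_card k n \<approx> cycles_card g n)" using a eqpoll_trans by blast
    hence "finite (cycles_card k n) \<and> finite (cycles_card g n)" using a assms(2) unfolding approx_fin_def by blast
    thus "finite (cycles_card f n) \<and> finite (cycles_card g n)" using fk eqpoll_finite_iff by blast
  qed
  moreover have "{S. open_cycle f S} \<approx> {S. open_cycle g S}"
    using assms unfolding same_type_def approx_fin_def using eqpoll_trans by blast
  moreover have "{S. forward_cycle f S} \<approx> {S. forward_cycle g S}"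
    using assms unfolding same_type_def approx_fin_def using eqpoll_trans by blast
  ultimately show ?thesis using fin unfolding approx_fin_def by blast
qed


lemma agree_funpow:
  assumes "\<And>x. x \<notin> D \<Longrightarrow> f x = g x" "\<And>l. l < i \<Longrightarrow> (g^^l) y \<notin> D"
  shows "(f^^i) y = (g^^i) y"
  using assms(2)
proof (induction i)
  case 0 thus ?case by simp
next
  case (Suc i)
  hence "(f^^i) y = (g^^i) y" by simp
  moreover have "(g^^i) y \<notin> D" using Suc.prems by simp
  ultimately show ?case using assms(1) by simp
qed

lemma closed_transfer:
  assumes agree: "\<And>x. x \<notin> D \<Longrightarrow> f x = g x" and disj: "S \<inter> (D \<union> f ` D \<union> g ` D) = {}"
    and T: "T \<subseteq> S" and c: "closed_under f T"
  shows "closed_under g T"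
  unfolding closed_under_def
proof (intro allI iffI)
  fix a assume a: "a \<in> T"
  hence "a \<notin> D" using T disj by blast
  hence "g a = f a" using agree by simp
  thus "g a \<in> T" using a c unfolding closed_under_def by simp
next
  fix a assume a: "g a \<in> T"
  show "a \<in> T"
  proof (cases "a \<in> D")
    case True
    hence "g a \<in> g ` D" by simp
    thus ?thesis using a T disj by blast
  next
    case False
    hence "f a \<in> T" using a agree by simp
    thus ?thesis using c unfolding closed_under_def by simp
  qed
qed

lemma common_cycle:
  assumes agree: "\<And>x. x \<notin> D \<Longrightarrow> f x = g x" and disj: "S \<inter> (D \<union> f ` D \<union> g ` D) = {}"
    and S: "is_cycle f S"
  shows "is_cycle g S"
proof -
  have agree': "\<And>x. x \<notin> D \<Longrightarrow> g x = f x" using agree by simp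
  have disj': "S \<inter> (D \<union> g ` D \<union> f ` D) = {}" using disj by blast
  have ne: "S \<noteq> {}" using S unfolding is_cycle_def by simp
  have cS: "closed_under f S" using S unfolding is_cycle_def by simp
  have min: "\<And>T. T \<subset> S \<Longrightarrow> T \<noteq> {} \<Longrightarrow> \<not> closed_under f T" using S unfolding is_cycle_def by simp
  have "closed_under g S" by (rule closed_transfer[OF agree disj subset_refl cS])
  moreover have "\<And>T. T \<subset> S \<Longrightarrow> T \<noteq> {} \<Longrightarrow> \<not> closed_under g T"
  proof
    fix T assume T: "T \<subset> S" "T \<noteq> {}" and c: "closed_under g T"
    have "T \<subseteq> S" using T(1) by (rule psubset_imp_subset)
    hence "closed_under f T" using closed_transfer[OF agree' disj' _ c] by blast
    thus False using min T by simp
  qed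
  ultimately show ?thesis using ne unfolding is_cycle_def by blast
qed

lemma fwd_count:
  assumes f: "inj f"
  shows "bij_betw (conn f) (- range f) {S. forward_cycle f S}"
  unfolding bij_betw_def
proof (intro conjI)
  show "inj_on (conn f) (- range f)"
  proof (rule inj_onI)
    fix b b' assume b: "b \<in> - range f" "b' \<in> - range f" "conn f b = conn f b'"
    have "b' \<in> conn f b" using b(3) by simp
    have "b' \<notin> range f" "b \<notin> range f" using b by auto
    thus "b = b'" using fwd_unique[OF f \<open>b \<notin> range f\<close> \<open>b' \<in> conn f b\<close>] by simp
  qed
  show "conn f ` (- range f) = {S. forward_cycle f S}"
  proof
    show "conn f ` (- range f) \<subseteq> {S. forward_cycle f S}"
    proof
      fix S assume "S \<in> conn f ` (- range f)"
      then obtain b where b: "b \<notin> range f" "S = conn f b" by blast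
      have "infinite S" using fwd_model[OF f b(1)] b(2) bij_betw_finite by blast
      moreover have "\<not> S \<subseteq> range f" using b conn_refl[of b f] by blast
      ultimately show "S \<in> {S. forward_cycle f S}" using b(2) is_cycle_conn by (simp add: forward_cycle_iff)
    qed
    show "{S. forward_cycle f S} \<subseteq> conn f ` (- range f)"
    proof
      fix S assume "S \<in> {S. forward_cycle f S}"
      hence S: "is_cycle f S" "\<not> S \<subseteq> range f" by (simp_all add: forward_cycle_iff)
      then obtain b where b: "b \<in> S" "b \<notin> range f" by blast
      have "S = conn f b" by (rule is_cycle_eq[OF S(1) b(1)])
      thus "S \<in> conn f ` (- range f)" using b(2) by simp
    qed
  qed
qed

lemma open_lepoll:
  fixes f g :: "'a \<Rightarrow> 'a"
  assumes f: "inj f" and g: "inj g" and D: "finite D" and agree: "\<And>x. x \<notin> D \<Longrightarrow> f x = g x"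
  shows "{S. open_cycle f S} \<lesssim> {S. open_cycle g S}"
proof -
  define R where "R G S \<longleftrightarrow> (\<exists>x. x \<in> S \<and> x \<in> G \<and> (\<forall>j. \<exists>z\<in>S. (g^^j) z = x))" for G S :: "'a set"
  have ex: "\<And>S. S \<in> {S. open_cycle f S} \<Longrightarrow> \<exists>G. G \<in> {S. open_cycle g S} \<and> R G S"
  proof -
    fix S assume "S \<in> {S. open_cycle f S}"
    hence S: "is_cycle f S" "infinite S" "S \<subseteq> range f" by (simp_all add: open_cycle_iff)
    obtain x where x: "S = conn f x" using is_cycle_iff[THEN iffD1, OF S(1)] by (elim exE)
    obtain P :: "int \<Rightarrow> 'a" where P: "bij_betw P UNIV S" "\<forall>i. f (P i) = P (i+1)"
      using open_model[OF f, of x] S x by blast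
    have injP: "inj P" using P(1) unfolding bij_betw_def by simp
    have "finite (P -` D)" using finite_vimageI[OF D injP] .
    hence "bdd_below (P -` D)" by (rule bdd_below_finite)
    then obtain N where N: "\<And>i. i \<in> P -` D \<Longrightarrow> N \<le> i" unfolding bdd_below_def by blast
    have out: "\<And>i. i < N \<Longrightarrow> P i \<notin> D" using N by force
    have ray: "\<And>j. (g^^j) (P (N - int j)) = P N"
    proof -
      fix j show "(g^^j) (P (N - int j)) = P N"
      proof (induction j)
        case 0 thus ?case by simp
      next
        case (Suc j)
        have "g (P (N - int (Suc j))) = f (P (N - int (Suc j)))" using agree out[of "N - int (Suc j)"] by simp
        also have "\<dots> = P (N - int j)" using P(2) by (simp add: algebra_simps)
        finally have "(g^^(Suc j)) (P (N - int (Suc j))) = (g^^j) (P (N - int j))"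
          by (simp add: funpow_Suc_right del: funpow.simps)
        thus ?case using Suc by simp
      qed
    qed
    have PS: "\<And>i. P i \<in> S" using P(1) unfolding bij_betw_def by blast
    define G where "G = conn g (P N)"
    have Gc: "is_cycle g G" unfolding G_def by (rule is_cycle_conn)
    have rayG: "\<And>j. P (N - int j) \<in> G"
    proof -
      fix j
      have "(g^^0) (P N) = (g^^j) (P (N - int j))" using ray by simp
      thus "P (N - int j) \<in> G" unfolding G_def conn_def by blast
    qed
    have "inj (\<lambda>j::nat. P (N - int j))"
    proof (rule injI)
      fix a b :: nat assume "P (N - int a) = P (N - int b)"
      hence "N - int a = N - int b" using injP injD by metis
      thus "a = b" by simp
    qed
    hence "infinite (range (\<lambda>j::nat. P (N - int j)))" using range_inj_infinite by blast
    moreover have "range (\<lambda>j::nat. P (N - int j)) \<subseteq> G" using rayG by blast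
    ultimately have Ginf: "infinite G" using finite_subset by blast
    have Grng: "G \<subseteq> range g"
    proof (rule ccontr)
      assume "\<not> G \<subseteq> range g"
      then obtain b where b: "b \<in> G" "b \<notin> range g" by blast
      have "G = conn g b" by (rule is_cycle_eq[OF Gc b(1)])
      hence "P N \<in> range (\<lambda>i. (g^^i) b)" using fwd_model[OF g b(2)] conn_refl[of "P N" g] unfolding G_def bij_betw_def by simp
      then obtain m where m: "P N = (g^^m) b" by blast
      have "(g^^m) (g (P (N - int (Suc m)))) = (g^^m) b"
        using ray[of "Suc m"] m by (simp add: funpow_Suc_right del: funpow.simps)
      hence "g (P (N - int (Suc m))) = b" using inj_fn[OF g] injD by metis
      thus False using b(2) by (metis rangeI)
    qed
    have "G \<in> {S. open_cycle g S}" using Gc Ginf Grng by (simp add: open_cycle_iff)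
    moreover have "R G S" unfolding R_def
    proof (intro exI conjI allI)
      show "P N \<in> S" by (rule PS)
      show "P N \<in> G" unfolding G_def by simp
      fix j show "\<exists>z\<in>S. (g^^j) z = P N" using ray PS by blast
    qed
    ultimately show "\<exists>G. G \<in> {S. open_cycle g S} \<and> R G S" by blast
  qed
  have uniq: "\<And>G S S'. G \<in> {S. open_cycle g S} \<Longrightarrow> S \<in> {S. open_cycle f S} \<Longrightarrow> S' \<in> {S. open_cycle f S} \<Longrightarrow>
      R G S \<Longrightarrow> R G S' \<Longrightarrow> S = S'"
  proof -
    fix G S S' assume G: "G \<in> {S. open_cycle g S}" and S: "S \<in> {S. open_cycle f S}" and S': "S' \<in> {S. open_cycle f S}"
      and RS: "R G S" and RS': "R G S'"
    have Gc: "is_cycle g G" using G by (simp add: open_cycle_iff)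
    have Sc: "is_cycle f S" "is_cycle f S'" using S S' by (simp_all add: open_cycle_iff)
    obtain x where x: "x \<in> S" "x \<in> G" "\<And>j. \<exists>z\<in>S. (g^^j) z = x" using RS unfolding R_def by blast
    obtain x' where x': "x' \<in> S'" "x' \<in> G" "\<And>j. \<exists>z\<in>S'. (g^^j) z = x'" using RS' unfolding R_def by blast
    have "G = conn g x" by (rule is_cycle_eq[OF Gc x(2)])
    hence "x' \<in> conn g x" using x' by simp
    hence "(\<exists>j. x' = (g^^j) x) \<or> (\<exists>j. x = (g^^j) x')" by (rule conn_cases[OF g])
    hence "S \<inter> S' \<noteq> {}"
    proof
      assume "\<exists>j. x' = (g^^j) x"
      then obtain j where j: "x' = (g^^j) x" by blast
      obtain z where z: "z \<in> S'" "(g^^j) z = x'" using x'(3) by blast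
      have "z = x" using z j inj_fn[OF g] injD by metis
      thus ?thesis using z x by blast
    next
      assume "\<exists>j. x = (g^^j) x'"
      then obtain j where j: "x = (g^^j) x'" by blast
      obtain z where z: "z \<in> S" "(g^^j) z = x" using x(3) by blast
      have "z = x'" using z j inj_fn[OF g] injD by metis
      thus ?thesis using z x' by blast
    qed
    thus "S = S'" by (rule cycle_disj[OF Sc])
  qed
  show ?thesis
  proof (rule lepoll_relational_full[where R=R])
    fix y assume "y \<in> {S. open_cycle f S}"
    thus "\<exists>x. x \<in> {S. open_cycle g S} \<and> R x y" by (rule ex)
  next
    fix x y y' assume "x \<in> {S. open_cycle g S}" "y \<in> {S. open_cycle f S}" "y' \<in> {S. open_cycle f S}" "R x y" "R x y'"
    thus "y = y'" by (rule uniq)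
  qed
qed

lemma countable_cycles:
  assumes "countable (UNIV :: 'a set)"
  shows "countable {S. is_cycle (f :: 'a \<Rightarrow> 'a) S}"
proof -
  have "{S. is_cycle f S} \<subseteq> range (conn f)"
  proof
    fix S assume "S \<in> {S. is_cycle f S}"
    then obtain x where "S = conn f x" using is_cycle_iff[THEN iffD1] by blast
    thus "S \<in> range (conn f)" by simp
  qed
  moreover have "countable (range (conn f))" using assms by simp
  ultimately show ?thesis using countable_subset by blast
qed

lemma countable_eqpoll:
  assumes "countable X" "infinite X" "countable Y" "infinite Y"
  shows "X \<approx> Y"
proof -
  have "X \<approx> (UNIV :: nat set)" using to_nat_on_infinite[OF assms(1,2)] unfolding eqpoll_def by blast
  moreover have "Y \<approx> (UNIV :: nat set)" using to_nat_on_infinite[OF assms(3,4)] unfolding eqpoll_def by blast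
  ultimately show ?thesis using eqpoll_sym[of Y] eqpoll_trans[of X] by blast
qed

lemma eq_or_finite:
  assumes "X = A \<union> B1" "Y = A \<union> B2" "finite B1" "finite B2" "countable X" "countable Y"
  shows "X \<approx> Y \<or> (finite X \<and> finite Y)"
proof (cases "finite A")
  case True thus ?thesis using assms by simp
next
  case False
  hence "infinite X" "infinite Y" using assms(1,2) by auto
  thus ?thesis using countable_eqpoll[OF assms(5) _ assms(6)] by blast
qed


lemma fin_perm_id: "fin_perm id" unfolding fin_perm_def by simp

lemma fin_perm_comp: "fin_perm p \<Longrightarrow> fin_perm q \<Longrightarrow> fin_perm (p \<circ> q)"
  unfolding fin_perm_def
proof (intro conjI)
  assume a: "bij p \<and> finite {x. p x \<noteq> x}" "bij q \<and> finite {x. q x \<noteq> x}"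
  thus "bij (p \<circ> q)" using bij_comp[of q p] by simp
  have "{x. (p \<circ> q) x \<noteq> x} \<subseteq> {x. q x \<noteq> x} \<union> {x. p x \<noteq> x}" by auto
  thus "finite {x. (p \<circ> q) x \<noteq> x}" using a finite_subset by blast
qed

lemma fin_perm_inv: "fin_perm p \<Longrightarrow> fin_perm (inv p)"
  unfolding fin_perm_def
proof (intro conjI)
  assume a: "bij p \<and> finite {x. p x \<noteq> x}"
  thus "bij (inv p)" using bij_imp_bij_inv[of p] by simp
  have "{x. inv p x \<noteq> x} \<subseteq> {x. p x \<noteq> x}"
  proof
    fix x assume "x \<in> {x. inv p x \<noteq> x}"
    hence "inv p x \<noteq> x" by simp
    moreover have "p (inv p x) = x" using a by (simp add: bij_is_surj surj_f_inv_f)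
    moreover have "inv p (p x) = x" using a bij_is_inj inv_f_f by metis
    ultimately have "p x \<noteq> x" by metis
    thus "x \<in> {x. p x \<noteq> x}" by simp
  qed
  thus "finite {x. inv p x \<noteq> x}" using a finite_subset by blast
qed

lemma fin_perm_conj: "bij h \<Longrightarrow> fin_perm p \<Longrightarrow> fin_perm (h \<circ> p \<circ> inv h)"
  unfolding fin_perm_def
proof (intro conjI)
  assume h: "bij h" and a: "bij p \<and> finite {x. p x \<noteq> x}"
  have "bij (inv h)" using h by (rule bij_imp_bij_inv)
  moreover have "bij (h \<circ> p)" using bij_comp[of p h] a h by simp
  ultimately show "bij (h \<circ> p \<circ> inv h)" using bij_comp[of "inv h" "h \<circ> p"] by simp
  have "{x. (h \<circ> p \<circ> inv h) x \<noteq> x} \<subseteq> h ` {x. p x \<noteq> x}"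
  proof
    fix x assume "x \<in> {x. (h \<circ> p \<circ> inv h) x \<noteq> x}"
    hence ne: "h (p (inv h x)) \<noteq> x" by simp
    have hx: "h (inv h x) = x" using h by (simp add: bij_is_surj surj_f_inv_f)
    hence "p (inv h x) \<noteq> inv h x" using ne by auto
    thus "x \<in> h ` {x. p x \<noteq> x}" using hx by (intro image_eqI[of _ _ "inv h x"]) simp_all
  qed
  thus "finite {x. (h \<circ> p \<circ> inv h) x \<noteq> x}" using a finite_subset by blast
qed

lemma perturb:
  fixes g p :: "'a \<Rightarrow> 'a"
  assumes cnt: "countable (UNIV :: 'a set)" and g: "inj g" and p: "fin_perm p"
  shows "approx_fin (g \<circ> p) g"
proof -
  define f where "f = g \<circ> p"
  define D where "D = {x. p x \<noteq> x}"
  have Dfin: "finite D" using p unfolding fin_perm_def D_def by simp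
  have bp: "bij p" using p unfolding fin_perm_def by simp
  have agree: "\<And>x. x \<notin> D \<Longrightarrow> f x = g x" unfolding f_def D_def by simp
  have agree': "\<And>x. x \<notin> D \<Longrightarrow> g x = f x" using agree by simp
  have f: "inj f" unfolding f_def using g bp bij_is_inj inj_compose by blast
  have rng: "range f = range g"
  proof -
    have "range f = g ` range p" unfolding f_def image_comp ..
    moreover have "range p = UNIV" using bp by (rule bij_is_surj)
    ultimately show ?thesis by simp
  qed
  have op: "{S. open_cycle f S} \<approx> {S. open_cycle g S}"
    by (rule lepoll_antisym[OF open_lepoll[OF f g Dfin agree] open_lepoll[OF g f Dfin agree']])
  have fw: "{S. forward_cycle f S} \<approx> {S. forward_cycle g S}"
  proof -
    have "- range f \<approx> {S. forward_cycle f S}" using fwd_count[OF f] unfolding eqpoll_def by blast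
    hence 1: "{S. forward_cycle f S} \<approx> - range g" using rng eqpoll_sym by metis
    have "- range g \<approx> {S. forward_cycle g S}" using fwd_count[OF g] unfolding eqpoll_def by blast
    thus ?thesis using 1 eqpoll_trans by blast
  qed
  define E where "E = D \<union> f ` D \<union> g ` D"
  have Efin: "finite E" unfolding E_def using Dfin by simp
  have E': "E = D \<union> g ` D \<union> f ` D" unfolding E_def by blast
  have far: "\<And>n. {S\<in>cycles_card f n. S \<inter> E = {}} = {S\<in>cycles_card g n. S \<inter> E = {}}"
  proof -
    fix n
    show "{S\<in>cycles_card f n. S \<inter> E = {}} = {S\<in>cycles_card g n. S \<inter> E = {}}"
    proof (intro equalityI subsetI)
      fix S assume "S \<in> {S\<in>cycles_card f n. S \<inter> E = {}}"
      hence S: "is_cycle f S" "finite S" "card S = n" "S \<inter> (D \<union> f ` D \<union> g ` D) = {}"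
        unfolding cycles_card_def E_def by simp_all
      have "is_cycle g S" by (rule common_cycle[OF agree S(4) S(1)])
      thus "S \<in> {S\<in>cycles_card g n. S \<inter> E = {}}" using S unfolding cycles_card_def E_def by simp
    next
      fix S assume "S \<in> {S\<in>cycles_card g n. S \<inter> E = {}}"
      hence S: "is_cycle g S" "finite S" "card S = n" "S \<inter> (D \<union> g ` D \<union> f ` D) = {}"
        unfolding cycles_card_def E' by simp_all
      have "is_cycle f S" by (rule common_cycle[OF agree' S(4) S(1)])
      thus "S \<in> {S\<in>cycles_card f n. S \<inter> E = {}}" using S unfolding cycles_card_def E' by simp
    qed
  qed
  have near: "\<And>(h::'a\<Rightarrow>'a) n. {S\<in>cycles_card h n. S \<inter> E \<noteq> {}} \<subseteq> conn h ` E"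
  proof
    fix h :: "'a \<Rightarrow> 'a" and n S assume "S \<in> {S\<in>cycles_card h n. S \<inter> E \<noteq> {}}"
    hence S: "is_cycle h S" "S \<inter> E \<noteq> {}" unfolding cycles_card_def by simp_all
    then obtain e where e: "e \<in> S" "e \<in> E" by blast
    have "S = conn h e" by (rule is_cycle_eq[OF S(1) e(1)])
    thus "S \<in> conn h ` E" using e(2) by simp
  qed
  have nearfin: "\<And>(h::'a\<Rightarrow>'a) n. finite {S\<in>cycles_card h n. S \<inter> E \<noteq> {}}"
  proof -
    fix h :: "'a \<Rightarrow> 'a" and n
    have "finite (conn h ` E)" using Efin by simp
    thus "finite {S\<in>cycles_card h n. S \<inter> E \<noteq> {}}" using near[of h n] finite_subset by blast
  qed
  have split: "\<And>(h::'a\<Rightarrow>'a) n. cycles_card h n = {S\<in>cycles_card h n. S \<inter> E = {}} \<union> {S\<in>cycles_card h n. S \<inter> E \<noteq> {}}"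
    by blast
  have cntc: "\<And>(h::'a\<Rightarrow>'a) n. countable (cycles_card h n)"
  proof -
    fix h :: "'a \<Rightarrow> 'a" and n
    have "cycles_card h n \<subseteq> {S. is_cycle h S}" unfolding cycles_card_def by blast
    thus "countable (cycles_card h n)" using countable_cycles[OF cnt, of h] countable_subset by blast
  qed
  have eqf: "\<And>n. cycles_card f n \<approx> cycles_card g n \<or> (finite (cycles_card f n) \<and> finite (cycles_card g n))"
  proof -
    fix n
    show "cycles_card f n \<approx> cycles_card g n \<or> (finite (cycles_card f n) \<and> finite (cycles_card g n))"
    proof (rule eq_or_finite)
      show "cycles_card f n = {S\<in>cycles_card f n. S \<inter> E = {}} \<union> {S\<in>cycles_card f n. S \<inter> E \<noteq> {}}" by (rule split)
      show "cycles_card g n = {S\<in>cycles_card f n. S \<inter> E = {}} \<union> {S\<in>cycles_card g n. S \<inter> E \<noteq> {}}"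
        unfolding far by (rule split)
    qed (rule nearfin, rule nearfin, rule cntc, rule cntc)
  qed
  have bad: "{n::nat. 0 < n \<and> \<not> (cycles_card f n \<approx> cycles_card g n)} \<subseteq> card ` (conn f ` E) \<union> card ` (conn g ` E)"
  proof
    fix n assume "n \<in> {n::nat. 0 < n \<and> \<not> (cycles_card f n \<approx> cycles_card g n)}"
    hence ne: "\<not> (cycles_card f n \<approx> cycles_card g n)" by simp
    have "{S\<in>cycles_card f n. S \<inter> E \<noteq> {}} \<noteq> {} \<or> {S\<in>cycles_card g n. S \<inter> E \<noteq> {}} \<noteq> {}"
    proof (rule ccontr)
      assume "\<not> ?thesis"
      hence e1: "{S\<in>cycles_card f n. S \<inter> E \<noteq> {}} = {}" "{S\<in>cycles_card g n. S \<inter> E \<noteq> {}} = {}" by simp_all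
      have "cycles_card f n = {S\<in>cycles_card f n. S \<inter> E = {}}" using split[of f n] e1(1) by simp
      also have "\<dots> = {S\<in>cycles_card g n. S \<inter> E = {}}" by (rule far)
      also have "\<dots> = cycles_card g n" using split[of g n] e1(2) by simp
      finally have "cycles_card f n = cycles_card g n" .
      thus False using ne by simp
    qed
    thus "n \<in> card ` (conn f ` E) \<union> card ` (conn g ` E)"
    proof
      assume "{S\<in>cycles_card f n. S \<inter> E \<noteq> {}} \<noteq> {}"
      then obtain S where S: "S \<in> {S\<in>cycles_card f n. S \<inter> E \<noteq> {}}" by blast
      hence "S \<in> conn f ` E" using near[of f n] by blast
      moreover have "card S = n" using S unfolding cycles_card_def by simp
      ultimately show ?thesis by blast
    next
      assume "{S\<in>cycles_card g n. S \<inter> E \<noteq> {}} \<noteq> {}"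
      then obtain S where S: "S \<in> {S\<in>cycles_card g n. S \<inter> E \<noteq> {}}" by blast
      hence "S \<in> conn g ` E" using near[of g n] by blast
      moreover have "card S = n" using S unfolding cycles_card_def by simp
      ultimately show ?thesis by blast
    qed
  qed
  have "finite {n::nat. 0 < n \<and> \<not> (cycles_card f n \<approx> cycles_card g n)}"
    by (rule finite_subset[OF bad]) (simp add: Efin)
  moreover have "\<forall>n::nat. 0 < n \<and> \<not> (cycles_card f n \<approx> cycles_card g n) \<longrightarrow> finite (cycles_card f n) \<and> finite (cycles_card g n)"
    using eqf by blast
  ultimately have "approx_fin f g" unfolding approx_fin_def using op fw by blast
  thus ?thesis unfolding f_def .
qed


lemma cycle_nonempty: "is_cycle f S \<Longrightarrow> S \<noteq> {}" unfolding is_cycle_def by simp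

lemma cycle_closed: "is_cycle f S \<Longrightarrow> closed_under f S" unfolding is_cycle_def by simp

lemma closed_in: "closed_under f S \<Longrightarrow> x \<in> S \<Longrightarrow> f x \<in> S" unfolding closed_under_def by simp

lemma closed_funpow_in: "closed_under f S \<Longrightarrow> x \<in> S \<Longrightarrow> (f^^i) x \<in> S"
  using closed_funpow[of f S i x] by simp

lemma merge1:
  fixes f :: "'a \<Rightarrow> 'a"
  assumes f: "inj f" and C: "is_cycle f C" and Cinf: "infinite C" and Z: "is_cycle f Z" and Zfin: "finite Z"
    and c: "c \<in> C" and z: "z \<in> Z"
  defines "t \<equiv> id(c := z, z := c)"
  shows "inj (f \<circ> t) \<and> range (f \<circ> t) = range f \<and> fin_perm t \<and>
    {S. is_cycle (f \<circ> t) S} = insert (C \<union> Z) ({S. is_cycle f S} - {C, Z})"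
proof -
  have CZ: "C \<inter> Z = {}"
  proof (rule ccontr)
    assume "C \<inter> Z \<noteq> {}"
    hence "C = Z" by (rule cycle_disj[OF C Z])
    thus False using Cinf Zfin by simp
  qed
  have cz: "c \<noteq> z" using CZ c z by blast
  have tt: "\<And>x. t (t x) = x" unfolding t_def by simp
  have bt: "bij t" by (rule involuntory_imp_bij) (rule tt)
  have ft: "fin_perm t"
  proof -
    have "{x. t x \<noteq> x} \<subseteq> {c, z}" unfolding t_def by auto
    hence "finite {x. t x \<noteq> x}" by (rule finite_subset) simp
    thus ?thesis using bt unfolding fin_perm_def by simp
  qed
  define F where "F = f \<circ> t"
  have Fc: "F c = f z" unfolding F_def t_def using cz by simp
  have Fz: "F z = f c" unfolding F_def t_def by simp
  define D where "D = {c, z}"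
  have agree: "\<And>x. x \<notin> D \<Longrightarrow> F x = f x" unfolding F_def t_def D_def by simp
  have agree': "\<And>x. x \<notin> D \<Longrightarrow> f x = F x" using agree by simp
  have "inj t" using bt by (rule bij_is_inj)
  hence injF: "inj F" unfolding F_def using f inj_compose by blast
  have rngF: "range F = range f"
  proof -
    have "range F = f ` range t" unfolding F_def image_comp ..
    moreover have "range t = UNIV" using bt by (rule bij_is_surj)
    ultimately show ?thesis by simp
  qed
  have cC: "closed_under f C" by (rule cycle_closed[OF C])
  have cZ: "closed_under f Z" by (rule cycle_closed[OF Z])
  have Cc: "C = conn f c" by (rule is_cycle_eq[OF C c])
  have Zz: "Z = conn f z" by (rule is_cycle_eq[OF Z z])
  define n where "n = card Z"
  have zfin: "finite (conn f z)" using Zfin Zz by simp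
  have n0: "0 < n" and zn: "(f^^n) z = z" and zb: "bij_betw (\<lambda>i. (f^^i) z) {..<n} Z"
    using finite_cycle_model[OF f zfin] unfolding n_def Zz[symmetric] by simp_all
  have cl1: "\<And>j. j < n \<Longrightarrow> (F^^(Suc j)) c = (f^^(Suc j)) z"
  proof -
    fix j show "j < n \<Longrightarrow> (F^^(Suc j)) c = (f^^(Suc j)) z"
    proof (induction j)
      case 0 thus ?case using Fc by simp
    next
      case (Suc j)
      hence IH: "(F^^(Suc j)) c = (f^^(Suc j)) z" by simp
      have inZ: "(f^^(Suc j)) z \<in> Z" by (rule closed_funpow_in[OF cZ z])
      hence ne_c: "(f^^(Suc j)) z \<noteq> c" using CZ c by blast
      have ne_z: "(f^^(Suc j)) z \<noteq> z"
      proof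
        assume "(f^^(Suc j)) z = z"
        hence "(f^^(Suc j)) z = (f^^0) z" by simp
        moreover have "Suc j \<in> {..<n}" "0 \<in> {..<n}" using Suc.prems n0 by simp_all
        moreover have ij: "inj_on (\<lambda>i. (f^^i) z) {..<n}" using zb unfolding bij_betw_def by simp
        ultimately have "Suc j = 0" using inj_onD[OF ij] by blast
        thus False by simp
      qed
      have "(F^^(Suc (Suc j))) c = F ((f^^(Suc j)) z)" using IH by simp
      also have "\<dots> = f ((f^^(Suc j)) z)" using agree ne_c ne_z unfolding D_def by simp
      finally show ?case by simp
    qed
  qed
  have Fn: "(F^^n) c = z"
  proof -
    obtain m where m: "n = Suc m" using n0 by (cases n) auto
    have "(F^^n) c = (f^^n) z" using cl1[of m] m by simp
    thus ?thesis using zn by simp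
  qed
  have FSn: "(F^^(Suc n)) c = f c" using Fn Fz by simp
  have cCZ: "closed_under F (C \<union> Z)"
    unfolding closed_under_def
  proof (intro allI)
    fix a
    show "F a \<in> C \<union> Z \<longleftrightarrow> a \<in> C \<union> Z"
    proof (cases "a \<in> D")
      case True
      hence "a \<in> C \<union> Z" using c z unfolding D_def by blast
      moreover have "F a \<in> C \<union> Z"
      proof (cases "a = c")
        case True thus ?thesis using Fc closed_in[OF cZ z] by simp
      next
        case False hence "a = z" using \<open>a \<in> D\<close> unfolding D_def by simp
        thus ?thesis using Fz closed_in[OF cC c] by simp
      qed
      ultimately show ?thesis by simp
    next
      case False
      hence "F a = f a" by (rule agree)
      moreover have "f a \<in> C \<longleftrightarrow> a \<in> C" "f a \<in> Z \<longleftrightarrow> a \<in> Z" using cC cZ unfolding closed_under_def by simp_all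
      ultimately show ?thesis by simp
    qed
  qed
  have inC_not_D: "\<And>y. y \<in> C \<Longrightarrow> y \<noteq> c \<Longrightarrow> y \<notin> D" using CZ z unfolding D_def by blast
  have fc_orbit: "\<And>l. (f^^l) (f c) \<noteq> c"
  proof
    fix l assume "(f^^l) (f c) = c"
    hence "(f^^(Suc l)) c = c" by (simp add: funpow_Suc_right del: funpow.simps)
    hence "conn f c = (\<lambda>i. (f^^i) c) ` {..<Suc l}" using periodic_conn[OF f _ zero_less_Suc] by simp
    hence "finite C" using Cc by simp
    thus False using Cinf by simp
  qed
  have conn_eq_CZ: "conn F c = C \<union> Z"
  proof
    have "c \<in> C \<union> Z" using c by simp
    thus "conn F c \<subseteq> C \<union> Z" by (rule closed_sub[OF cCZ])
    show "C \<union> Z \<subseteq> conn F c"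
    proof
      fix y assume y: "y \<in> C \<union> Z"
      show "y \<in> conn F c"
      proof (cases "y \<in> Z")
        case True
        then obtain i where i: "i < n" "y = (f^^i) z" using zb unfolding bij_betw_def by auto
        show ?thesis
        proof (cases i)
          case 0
          hence "y = (F^^n) c" using i Fn by simp
          thus ?thesis by (simp only: conn_funpow)
        next
          case (Suc j)
          hence "y = (F^^(Suc j)) c" using i cl1[of j] by simp
          thus ?thesis by (simp only: conn_funpow)
        qed
      next
        case False
        hence yC: "y \<in> C" using y by simp
        have orbC: "\<And>l. (f^^l) y \<in> C" using closed_funpow_in[OF cC yC] .
        show ?thesis
        proof (cases "\<exists>i. (f^^i) y = c")
          case True
          define i where "i = (LEAST i. (f^^i) y = c)"
          obtain i0 where "(f^^i0) y = c" using True by blast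
          hence i: "(f^^i) y = c" unfolding i_def by (rule LeastI)
          have before: "\<And>l. l < i \<Longrightarrow> (f^^l) y \<notin> D"
          proof -
            fix l assume "l < i"
            hence "(f^^l) y \<noteq> c" unfolding i_def by (rule not_less_Least)
            thus "(f^^l) y \<notin> D" using inC_not_D[OF orbC[of l]] by simp
          qed
          have "(F^^i) y = (f^^i) y" by (rule agree_funpow[OF agree before])
          hence "(F^^0) c = (F^^i) y" using i by simp
          thus ?thesis unfolding conn_def by blast
        next
          case False
          have nD: "\<And>l. (f^^l) y \<notin> D"
          proof -
            fix l
            have "(f^^l) y \<noteq> c" using False by simp
            thus "(f^^l) y \<notin> D" using inC_not_D[OF orbC[of l]] by simp
          qed
          have allF: "\<And>l. (F^^l) y = (f^^l) y"
            by (rule agree_funpow[OF agree nD])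
          have "y \<in> conn f c" using yC Cc by simp
          then obtain m j where mj: "(f^^m) c = (f^^j) y" unfolding conn_def by blast
          have "m \<noteq> 0"
          proof
            assume "m = 0"
            hence "(f^^j) y = c" using mj by simp
            thus False using False by blast
          qed
          then obtain m' where m': "m = Suc m'" by (cases m) auto
          have fcC: "f c \<in> C" by (rule closed_in[OF cC c])
          have nD2: "\<And>l. (f^^l) (f c) \<notin> D"
            using inC_not_D[OF closed_funpow_in[OF cC fcC] fc_orbit] by simp
          have "(F^^m') (f c) = (f^^m') (f c)"
            by (rule agree_funpow[OF agree nD2])
          moreover have "(F^^(m' + Suc n)) c = (F^^m') ((F^^(Suc n)) c)" by (rule funpow_add_apply)
          ultimately have "(F^^(m' + Suc n)) c = (f^^m') (f c)" using FSn by (simp del: funpow.simps)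
          also have "\<dots> = (f^^m) c" using m' by (simp add: funpow_Suc_right del: funpow.simps)
          also have "\<dots> = (F^^j) y" using mj allF by simp
          finally show ?thesis unfolding conn_def by blast
        qed
      qed
    qed
  qed
  have CZcyc: "is_cycle F (C \<union> Z)" using is_cycle_conn[of F c] conn_eq_CZ by simp
  have Esub: "D \<union> F ` D \<union> f ` D \<subseteq> C \<union> Z"
    unfolding D_def using c z Fc Fz closed_in[OF cC c] closed_in[OF cZ z] by auto
  have Esub': "D \<union> f ` D \<union> F ` D \<subseteq> C \<union> Z" using Esub by blast
  have Cne: "C \<noteq> {}" and Zne: "Z \<noteq> {}" using c z by auto
  have "{S. is_cycle F S} = insert (C \<union> Z) ({S. is_cycle f S} - {C, Z})"
  proof (intro equalityI subsetI)
    fix S assume "S \<in> {S. is_cycle F S}"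
    hence S: "is_cycle F S" by simp
    show "S \<in> insert (C \<union> Z) ({S. is_cycle f S} - {C, Z})"
    proof (cases "S \<inter> (C \<union> Z) = {}")
      case False
      hence "S = C \<union> Z" by (rule cycle_disj[OF S CZcyc])
      thus ?thesis by simp
    next
      case True
      hence "S \<inter> (D \<union> F ` D \<union> f ` D) = {}" using Esub by blast
      hence "is_cycle f S" using common_cycle[OF agree _ S] by blast
      moreover have "S \<noteq> C" "S \<noteq> Z" using True Cne Zne by auto
      ultimately show ?thesis by simp
    qed
  next
    fix S assume "S \<in> insert (C \<union> Z) ({S. is_cycle f S} - {C, Z})"
    thus "S \<in> {S. is_cycle F S}"
    proof
      assume "S = C \<union> Z" thus ?thesis using CZcyc by simp
    next
      assume "S \<in> {S. is_cycle f S} - {C, Z}"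
      hence S: "is_cycle f S" "S \<noteq> C" "S \<noteq> Z" by simp_all
      have "S \<inter> C = {}" using cycle_disj[OF S(1) C] S(2) by blast
      moreover have "S \<inter> Z = {}" using cycle_disj[OF S(1) Z] S(3) by blast
      ultimately have "S \<inter> (D \<union> f ` D \<union> F ` D) = {}" using Esub' by blast
      hence "is_cycle F S" using common_cycle[OF agree' _ S(1)] by blast
      thus ?thesis by simp
    qed
  qed
  thus ?thesis using injF rngF ft unfolding F_def by simp
qed


lemma ins_eqpoll:
  assumes "a \<notin> A" "b \<notin> A" shows "insert a A \<approx> insert b A"
proof -
  have "bij_betw (\<lambda>x. if x = a then b else x) (insert a A) (insert b A)"
    unfolding bij_betw_def inj_on_def using assms by auto
  thus ?thesis unfolding eqpoll_def by blast
qed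

lemma merge_all:
  fixes f :: "'a \<Rightarrow> 'a"
  assumes f: "inj f" and C: "is_cycle f C" and Cinf: "infinite C" and fin: "finite \<Z>"
    and Zs: "\<forall>Z\<in>\<Z>. is_cycle f Z \<and> finite Z"
  shows "\<exists>p. fin_perm p \<and> inj (f \<circ> p) \<and> range (f \<circ> p) = range f \<and>
    {S. is_cycle (f \<circ> p) S} = insert (C \<union> \<Union>\<Z>) ({S. is_cycle f S} - {C} - \<Z>)"
  using fin Zs
proof (induction rule: finite_induct)
  case empty
  have e: "{S. is_cycle (f \<circ> id) S} = insert (C \<union> \<Union>{}) ({S. is_cycle f S} - {C} - {})" using C by auto
  show ?case
    by (rule exI[of _ id], intro conjI) (simp_all only: fin_perm_id e, simp_all add: f)
next
  case (insert Z \<Z>)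
  have Zc: "is_cycle f Z" "finite Z" using insert.prems by simp_all
  obtain p1 where p1: "fin_perm p1" "inj (f \<circ> p1)" "range (f \<circ> p1) = range f"
    "{S. is_cycle (f \<circ> p1) S} = insert (C \<union> \<Union>\<Z>) ({S. is_cycle f S} - {C} - \<Z>)"
  proof -
    have "\<forall>Z\<in>\<Z>. is_cycle f Z \<and> finite Z" using insert.prems by simp
    from insert.IH[OF this] show ?thesis by (elim exE) (rule that, blast+)
  qed
  define f1 where "f1 = f \<circ> p1"
  define C1 where "C1 = C \<union> \<Union>\<Z>"
  have C1c: "is_cycle f1 C1" using p1(4) unfolding f1_def C1_def by blast
  have C1inf: "infinite C1" using Cinf unfolding C1_def by simp
  have ZC: "Z \<noteq> C" using Zc Cinf by auto
  have Zc1: "is_cycle f1 Z" using p1(4) Zc(1) ZC insert.hyps(2) unfolding f1_def by blast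
  obtain c where c: "c \<in> C" using cycle_nonempty[OF C] by blast
  hence c1: "c \<in> C1" unfolding C1_def by simp
  obtain z where z: "z \<in> Z" using cycle_nonempty[OF Zc(1)] by blast
  define t where "t = id(c := z, z := c)"
  have m: "inj (f1 \<circ> t) \<and> range (f1 \<circ> t) = range f1 \<and> fin_perm t \<and>
    {S. is_cycle (f1 \<circ> t) S} = insert (C1 \<union> Z) ({S. is_cycle f1 S} - {C1, Z})"
    unfolding t_def by (rule merge1[OF p1(2)[folded f1_def] C1c C1inf Zc1 Zc(2) c1 z])
  define A where "A = {S. is_cycle f S} - {C} - \<Z>"
  have C1A: "C1 \<notin> A"
  proof
    assume "C1 \<in> A"
    hence "is_cycle f C1" "C1 \<noteq> C" unfolding A_def by simp_all
    moreover have "C \<inter> C1 \<noteq> {}" using c c1 by blast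
    ultimately show False using cycle_disj[OF C \<open>is_cycle f C1\<close>] by simp
  qed
  have "{S. is_cycle (f1 \<circ> t) S} = insert (C1 \<union> Z) (insert C1 A - {C1, Z})"
    using m p1(4) unfolding f1_def C1_def A_def by simp
  also have "insert C1 A - {C1, Z} = {S. is_cycle f S} - {C} - insert Z \<Z>"
    using C1A unfolding A_def by blast
  also have "C1 \<union> Z = C \<union> \<Union>(insert Z \<Z>)" unfolding C1_def by blast
  finally have cyc0: "{S. is_cycle (f1 \<circ> t) S} = insert (C \<union> \<Union>(insert Z \<Z>)) ({S. is_cycle f S} - {C} - insert Z \<Z>)" .
  have eq: "f \<circ> (p1 \<circ> t) = f1 \<circ> t" unfolding f1_def by (rule comp_assoc[symmetric])
  have cyc: "{S. is_cycle (f \<circ> (p1 \<circ> t)) S} = insert (C \<union> \<Union>(insert Z \<Z>)) ({S. is_cycle f S} - {C} - insert Z \<Z>)"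
    unfolding eq by (rule cyc0)
  have "fin_perm (p1 \<circ> t)" using fin_perm_comp[OF p1(1)] m by blast
  moreover have "inj (f \<circ> (p1 \<circ> t))" using m unfolding eq by blast
  moreover have "range (f \<circ> (p1 \<circ> t)) = range f" using m p1(3) unfolding eq f1_def by simp
  ultimately show ?case using cyc by blast
qed

lemma after_merge:
  fixes f f1 :: "'a \<Rightarrow> 'a"
  assumes f: "inj f" and rng: "range f1 = range f" and C: "is_cycle f C" and Cinf: "infinite C"
    and Zs: "\<forall>Z\<in>\<Z>. is_cycle f Z \<and> finite Z"
    and cyc: "{S. is_cycle f1 S} = insert (C \<union> \<Union>\<Z>) ({S. is_cycle f S} - {C} - \<Z>)"
  shows "cycles_card f1 n = cycles_card f n - \<Z>"
    and "{S. is_cycle f1 S \<and> infinite S \<and> (S \<subseteq> range f1) = b} \<approx> {S. is_cycle f S \<and> infinite S \<and> (S \<subseteq> range f) = b}"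
proof -
  define C' where "C' = C \<union> \<Union>\<Z>"
  have C'inf: "infinite C'" using Cinf unfolding C'_def by simp
  have cyc': "\<And>S. is_cycle f1 S \<longleftrightarrow> S = C' \<or> (is_cycle f S \<and> S \<noteq> C \<and> S \<notin> \<Z>)"
    using cyc unfolding C'_def by blast
  show "cycles_card f1 n = cycles_card f n - \<Z>"
  proof (intro equalityI subsetI)
    fix S assume "S \<in> cycles_card f1 n"
    hence S: "is_cycle f1 S" "finite S" "card S = n" unfolding cycles_card_def by simp_all
    hence "S \<noteq> C'" using C'inf by auto
    moreover have "S = C' \<or> (is_cycle f S \<and> S \<noteq> C \<and> S \<notin> \<Z>)" using cyc'[of S] S(1) by simp
    ultimately have "is_cycle f S \<and> S \<notin> \<Z>" by simp
    thus "S \<in> cycles_card f n - \<Z>" using S unfolding cycles_card_def by simp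
  next
    fix S assume "S \<in> cycles_card f n - \<Z>"
    hence S: "is_cycle f S" "finite S" "card S = n" "S \<notin> \<Z>" unfolding cycles_card_def by simp_all
    hence "S \<noteq> C" using Cinf by auto
    hence "is_cycle f1 S" using cyc'[of S] S by simp
    thus "S \<in> cycles_card f1 n" using S unfolding cycles_card_def by simp
  qed
  have Zr: "\<Union>\<Z> \<subseteq> range f"
  proof
    fix x assume "x \<in> \<Union>\<Z>"
    then obtain Z where Z: "Z \<in> \<Z>" "x \<in> Z" by blast
    have "is_cycle f Z" using Zs Z(1) by blast
    hence "Z = conn f x" using Z(2) by (rule is_cycle_eq)
    moreover have "finite Z" using Zs Z by blast
    ultimately show "x \<in> range f" using finite_cycle_in_range[OF f, of x] conn_refl[of x f] by blast
  qed
  have C'r: "(C' \<subseteq> range f) = (C \<subseteq> range f)" unfolding C'_def using Zr by blast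
  have C'A: "C' \<notin> {S. is_cycle f S} - {C}"
  proof
    assume "C' \<in> {S. is_cycle f S} - {C}"
    hence "is_cycle f C'" "C' \<noteq> C" by simp_all
    moreover have "C \<inter> C' \<noteq> {}" using cycle_nonempty[OF C] unfolding C'_def by blast
    ultimately show False using cycle_disj[OF C \<open>is_cycle f C'\<close>] by simp
  qed
  define X where "X = {S. is_cycle f S \<and> infinite S \<and> (S \<subseteq> range f) = b}"
  have X1: "{S. is_cycle f1 S \<and> infinite S \<and> (S \<subseteq> range f1) = b} =
    (if (C \<subseteq> range f) = b then insert C' (X - {C}) else X - {C})"
  proof -
    have inZ: "\<And>S. S \<in> \<Z> \<Longrightarrow> finite S" using Zs by blast
    have "\<And>S. (is_cycle f1 S \<and> infinite S \<and> (S \<subseteq> range f1) = b) \<longleftrightarrow>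
       (S = C' \<and> (C \<subseteq> range f) = b) \<or> (S \<in> X - {C})"
    proof -
      fix S
      show "(is_cycle f1 S \<and> infinite S \<and> (S \<subseteq> range f1) = b) \<longleftrightarrow>
       (S = C' \<and> (C \<subseteq> range f) = b) \<or> (S \<in> X - {C})"
      proof (cases "S = C'")
        case True thus ?thesis using C'inf C'r C'A unfolding rng cyc' X_def by auto
      next
        case False
        have "infinite S \<Longrightarrow> S \<notin> \<Z>" using inZ by blast
        thus ?thesis using False unfolding rng cyc' X_def by auto
      qed
    qed
    thus ?thesis by auto
  qed
  show "{S. is_cycle f1 S \<and> infinite S \<and> (S \<subseteq> range f1) = b} \<approx> X"
  proof (cases "(C \<subseteq> range f) = b")
    case True
    hence "C \<in> X" unfolding X_def using C Cinf by simp
    hence "X = insert C (X - {C})" by blast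
    moreover have "C' \<notin> X - {C}" using C'A unfolding X_def by blast
    ultimately show ?thesis using X1 True ins_eqpoll[of C' "X - {C}" C] by simp
  next
    case False
    hence "C \<notin> X" unfolding X_def by simp
    hence "X - {C} = X" by simp
    thus ?thesis using X1 False by simp
  qed
qed


lemma merged_type:
  fixes f :: "'a \<Rightarrow> 'a"
  assumes f: "inj f" and C: "is_cycle f C" and Cinf: "infinite C" and NF: "finite N"
    and Nfin: "\<forall>n\<in>N. finite (cycles_card f n)"
  shows "\<exists>p. fin_perm p \<and> inj (f \<circ> p) \<and> (\<forall>n. cycles_card (f \<circ> p) n = (if n \<in> N then {} else cycles_card f n)) \<and>
     {S. open_cycle (f \<circ> p) S} \<approx> {S. open_cycle f S} \<and> {S. forward_cycle (f \<circ> p) S} \<approx> {S. forward_cycle f S}"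
proof -
  define \<Z> where "\<Z> = (\<Union>n\<in>N. cycles_card f n)"
  have Zfin: "finite \<Z>" unfolding \<Z>_def
  proof (rule finite_UN_I[OF NF])
    fix n assume "n \<in> N" thus "finite (cycles_card f n)" using Nfin by simp
  qed
  have Zs: "\<forall>Z\<in>\<Z>. is_cycle f Z \<and> finite Z" unfolding \<Z>_def cycles_card_def by blast
  obtain p where p: "fin_perm p" "inj (f \<circ> p)" "range (f \<circ> p) = range f"
    "{S. is_cycle (f \<circ> p) S} = insert (C \<union> \<Union>\<Z>) ({S. is_cycle f S} - {C} - \<Z>)"
    using merge_all[OF f C Cinf Zfin Zs] by blast
  note am = after_merge[OF f p(3) C Cinf Zs p(4)]
  have cc: "\<And>n. cycles_card (f \<circ> p) n = (if n \<in> N then {} else cycles_card f n)"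
  proof -
    fix n
    show "cycles_card (f \<circ> p) n = (if n \<in> N then {} else cycles_card f n)"
    proof (cases "n \<in> N")
      case True
      hence "cycles_card f n \<subseteq> \<Z>" unfolding \<Z>_def by blast
      hence "cycles_card f n - \<Z> = {}" by simp
      thus ?thesis using am(1)[of n] True by simp
    next
      case False
      have "cycles_card f n \<inter> \<Z> = {}"
      proof (rule ccontr)
        assume "cycles_card f n \<inter> \<Z> \<noteq> {}"
        then obtain S m where "S \<in> cycles_card f n" "m \<in> N" "S \<in> cycles_card f m" unfolding \<Z>_def by blast
        hence "n = m" unfolding cycles_card_def by simp
        thus False using False \<open>m \<in> N\<close> by simp
      qed
      hence "cycles_card f n - \<Z> = cycles_card f n" by (rule Diff_triv)
      thus ?thesis using am(1)[of n] False by simp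
    qed
  qed
  have op: "{S. open_cycle (f \<circ> p) S} \<approx> {S. open_cycle f S}"
    using am(2)[of True] unfolding open_cycle_iff by simp
  have fw: "{S. forward_cycle (f \<circ> p) S} \<approx> {S. forward_cycle f S}"
    using am(2)[of False] unfolding forward_cycle_iff by simp
  show ?thesis by (rule exI[of _ p]) (intro conjI p(1,2) allI cc op fw)
qed

theorem mainTheorem11:
  fixes f g :: "'a \<Rightarrow> 'a"
  assumes "countable (UNIV :: 'a set)" and "infinite (UNIV :: 'a set)"
    and "inj f" and "inj g"
    and "\<exists>S. is_cycle f S \<and> infinite S"
    and "\<exists>S. is_cycle g S \<and> infinite S"
  shows "approx_fin f g \<longleftrightarrow>
    (\<exists>h h1 h2. bij h \<and> fin_perm h1 \<and> fin_perm h2 \<and>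
       f = inv h \<circ> h2 \<circ> g \<circ> h1 \<circ> h)"
proof
  assume ap: "approx_fin f g"
  define N where "N = {n::nat. 0 < n \<and> \<not> (cycles_card f n \<approx> cycles_card g n)}"
  have NF: "finite N" using ap unfolding approx_fin_def N_def by blast
  have Nfin: "\<forall>n\<in>N. finite (cycles_card f n)" "\<forall>n\<in>N. finite (cycles_card g n)"
    using ap unfolding approx_fin_def N_def by blast+
  obtain C where C: "is_cycle f C" "infinite C" using assms(5) by blast
  obtain D where D: "is_cycle g D" "infinite D" using assms(6) by blast
  obtain pf where pf: "fin_perm pf" "inj (f \<circ> pf)" "\<forall>n. cycles_card (f \<circ> pf) n = (if n \<in> N then {} else cycles_card f n)"
     "{S. open_cycle (f \<circ> pf) S} \<approx> {S. open_cycle f S}" "{S. forward_cycle (f \<circ> pf) S} \<approx> {S. forward_cycle f S}"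
    using merged_type[OF assms(3) C NF Nfin(1)] by blast
  obtain pg where pg: "fin_perm pg" "inj (g \<circ> pg)" "\<forall>n. cycles_card (g \<circ> pg) n = (if n \<in> N then {} else cycles_card g n)"
     "{S. open_cycle (g \<circ> pg) S} \<approx> {S. open_cycle g S}" "{S. forward_cycle (g \<circ> pg) S} \<approx> {S. forward_cycle g S}"
    using merged_type[OF assms(4) D NF Nfin(2)] by blast
  define f1 where "f1 = f \<circ> pf"
  define g1 where "g1 = g \<circ> pg"
  have st: "same_type f1 g1" unfolding same_type_def
  proof (intro conjI allI impI)
    fix n :: nat assume n: "0 < n"
    show "cycles_card f1 n \<approx> cycles_card g1 n"
    proof (cases "n \<in> N")
      case True thus ?thesis using pf(3) pg(3) unfolding f1_def g1_def by simp
    next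
      case False
      hence "cycles_card f n \<approx> cycles_card g n" using n unfolding N_def by blast
      thus ?thesis using pf(3) pg(3) False unfolding f1_def g1_def by simp
    qed
  next
    have "{S. open_cycle f S} \<approx> {S. open_cycle g S}" using ap unfolding approx_fin_def by blast
    hence "{S. open_cycle f1 S} \<approx> {S. open_cycle g S}" using pf(4) eqpoll_trans unfolding f1_def by blast
    thus "{S. open_cycle f1 S} \<approx> {S. open_cycle g1 S}" using pg(4) eqpoll_sym eqpoll_trans unfolding g1_def by blast
  next
    have "{S. forward_cycle f S} \<approx> {S. forward_cycle g S}" using ap unfolding approx_fin_def by blast
    hence "{S. forward_cycle f1 S} \<approx> {S. forward_cycle g S}" using pf(5) eqpoll_trans unfolding f1_def by blast
    thus "{S. forward_cycle f1 S} \<approx> {S. forward_cycle g1 S}" using pg(5) eqpoll_sym eqpoll_trans unfolding g1_def by blast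
  qed
  obtain h where h: "bij h" "\<And>x. h (f1 x) = g1 (h x)"
    using conjugacy[OF pf(2)[folded f1_def] pg(2)[folded g1_def] st] by blast
  define h1 where "h1 = pg \<circ> (h \<circ> inv pf \<circ> inv h)"
  have bpf: "bij pf" using pf(1) unfolding fin_perm_def by simp
  have fh1: "fin_perm h1" unfolding h1_def
    by (rule fin_perm_comp[OF pg(1) fin_perm_conj[OF h(1) fin_perm_inv[OF pf(1)]]])
  have "f = inv h \<circ> id \<circ> g \<circ> h1 \<circ> h"
  proof
    fix x
    have hh: "inv h (h y) = y" for y using h(1) bij_is_inj inv_f_f by metis
    have pp: "pf (inv pf y) = y" for y using bpf by (simp add: bij_is_surj surj_f_inv_f)
    have "(inv h \<circ> id \<circ> g \<circ> h1 \<circ> h) x = inv h (g (pg (h (inv pf (inv h (h x))))))"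
      unfolding h1_def by simp
    also have "\<dots> = inv h (g1 (h (inv pf x)))" unfolding g1_def hh by simp
    also have "\<dots> = inv h (h (f1 (inv pf x)))" using h(2) by simp
    also have "\<dots> = f1 (inv pf x)" by (rule hh)
    also have "\<dots> = f x" unfolding f1_def using pp by simp
    finally show "f x = (inv h \<circ> id \<circ> g \<circ> h1 \<circ> h) x" by simp
  qed
  thus "\<exists>h h1 h2. bij h \<and> fin_perm h1 \<and> fin_perm h2 \<and> f = inv h \<circ> h2 \<circ> g \<circ> h1 \<circ> h"
    using h(1) fh1 fin_perm_id by blast
next
  assume "\<exists>h h1 h2. bij h \<and> fin_perm h1 \<and> fin_perm h2 \<and> f = inv h \<circ> h2 \<circ> g \<circ> h1 \<circ> h"
  then obtain h h1 h2 where hh: "bij h" "fin_perm h1" "fin_perm h2" "f = inv h \<circ> h2 \<circ> g \<circ> h1 \<circ> h" by blast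
  define p where "p = h1 \<circ> h2"
  have fp: "fin_perm p" unfolding p_def by (rule fin_perm_comp[OF hh(2) hh(3)])
  define g' where "g' = g \<circ> p"
  have bp: "bij p" using fp unfolding fin_perm_def by simp
  have injg': "inj g'" unfolding g'_def using assms(4) bp bij_is_inj inj_compose by blast
  have bh2: "bij h2" using hh(3) unfolding fin_perm_def by simp
  define H where "H = inv h2 \<circ> h"
  have bH: "bij H" unfolding H_def using bij_comp[OF hh(1) bij_imp_bij_inv[OF bh2]] by simp
  have comm: "\<And>x. H (f x) = g' (H x)"
  proof -
    fix x
    have a: "h (inv h y) = y" for y using hh(1) by (simp add: bij_is_surj surj_f_inv_f)
    have b: "inv h2 (h2 y) = y" for y using bh2 bij_is_inj inv_f_f by metis
    have c: "h2 (inv h2 y) = y" for y using bh2 by (simp add: bij_is_surj surj_f_inv_f)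
    have "H (f x) = g (h1 (h x))" unfolding H_def hh(4) by (simp add: a b)
    also have "\<dots> = g' (H x)" unfolding g'_def p_def H_def by (simp add: c)
    finally show "H (f x) = g' (H x)" .
  qed
  have "same_type f g'" by (rule conj_same_type[OF assms(3) injg' bH comm])
  moreover have "approx_fin g' g" unfolding g'_def by (rule perturb[OF assms(1,4) fp])
  ultimately show "approx_fin f g" by (rule same_type_approx)
qed

end
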